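(* Let $\Omega\subset\mathbb{R}^d$ be a bounded Lipschitz domain, $\mathcal{D}\subseteq\mathbb{R}^D$ open, and $\mathcal{H}$ a Hilbert space of functions on $\Omega\times\mathcal{D}$. Let $\mathcal{L}(t)$, $t\in(0,T)$, be linear operators such that $\int_{\mathcal{D}}\mathcal{L}(t)\varphi(\vec{x},\vec{q})\,\mathrm{d}\vec{q}=0$ for all sufficiently regular $\varphi$, and consider the evolution problem $\partial_t\psi=\mathcal{L}(t)\psi$, $\psi(0)=\psi_0$, where $\psi_0(\vec{x},\cdot)$ is a probability density on $\mathcal{D}$ for a.e. $\vec{x}$. Let $\Phi:\mathcal{Z}\times\mathcal{D}\to(0,\infty)$ be smooth with $\mathcal{Z}\subset\mathbb{R}^M$, and let $$\mathcal{M}_\Phi=\{f\in\mathcal{H}: f(\vec{x},\vec{q})=\Phi(z(\vec{x}),\vec{q}) \text{ on }\Omega\times\mathcal{D},\ z:\Omega\to\mathcal{Z}\}.$$ Assume $\mathcal{M}_\Phi$ is a manifold, so that $\partial_z\Phi(z,\cdot)$ has full rank for all $z\in\mathcal{Z}$ and the tangent space at $f=\Phi(z(\cdot),\cdot)$ is $T_f\mathcal{M}_\Phi=\{\partial_z\Phi(z(\cdot),\cdot)w: w\in\mathbb{R}^M\}$. For such $f$ let $\varphi_1(z(\vec{x}),\cdot),\dots,\varphi_M(z(\vec{x}),\cdot)$ be a basis of the range of $\partial_z\Phi(z(\vec{x}),\cdot)$ with $\int_{\mathcal{D}}\varphi_m\varphi_l\,\frac{\mathrm{d}\vec{q}}{f(\vec{x},\vec{q})}=\delta_{m,l}$,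 and define $P_f:\mathcal{H}\to T_f\mathcal{M}_\Phi$ by $$P_f\varphi(\vec{x},\vec{q})=\sum_{m=1}^M\Big(\int_{\mathcal{D}}\varphi_m(z(\vec{x}),\vec{q}')\varphi(\vec{x},\vec{q}')\frac{\mathrm{d}\vec{q}'}{f(\vec{x},\vec{q}')}\Big)\varphi_m(z(\vec{x}),\vec{q}).$$ A variational approximation is a curve $f(t)\in\mathcal{M}_\Phi$ such that for a.e. $(t,\vec{x})\in(0,T)\times\Omega$: $\partial_t f(t)\in T_{f(t)}\mathcal{M}_\Phi$ and $$\int_{\mathcal{D}}\varphi(\vec{x},\vec{q})\big(\partial_t-\mathcal{L}(t)\big)f(t,\vec{x},\vec{q})\,\frac{\mathrm{d}\vec{q}}{f(t,\vec{x},\vec{q})}=0\quad\text{for all }\varphi\in T_{f(t)}\mathcal{M}_\Phi. \qquad(\ast)$$ Then: (i) Condition $(\ast)$ is equivalent to $\partial_t f(t)$ minimizing, among elements of $T_{f(t)}\mathcal{M}_\Phi$, the quantity $\int_{\mathcal{D}}\big(\partial_t f(t,\vec{x},\vec{q})-\mathcal{L}(t)f(t,\vec{x},\vec{q})\big)^2\frac{\mathrm{d}\vec{q}}{f(t,\vec{x},\vec{q})}$. (ii) Condition $(\ast)$ is equivalent to $\partial_t f(t)=P_{f(t)}\mathcal{L}(t)f(t)$. (iii) If $f(t)\in T_{f(t)}\mathcal{M}_\Phi$, then $\int_{\mathcal{D}}f(t,\vec{x},\vec{q})\,\mathrm{d}\vec{q}=\int_{\mathcal{D}}f(0,\vec{x},\vec{q})\,\mathrm{d}\vec{q}$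 for all times $t$ for which the variational approximation exists. (iv) If the evolution problem has an evolution operator $\mathcal{T}(t,s)$, $t,s\in(0,T)$, and $\psi(0)=f(0)$, then for all times $t$ for which the variational approximation exists, $$\psi(t)-f(t)=\int_0^t\mathcal{T}(t,s)\,(I_{\mathcal{H}}-P_{f(s)})\,\mathcal{L}(s)f(s)\,\mathrm{d}s.$$
   Context: $I_{\mathcal{H}}$ denotes the identity on $\mathcal{H}$. The weight $1/f$ in the inner products corresponds to the Fisher--Rao information metric. *)

theory Defs
  imports "HOL-Analysis.Analysis"
begin

definition lipschitz_domain :: "'a::euclidean_space set \<Rightarrow> bool" where
  "lipschitz_domain \<Omega> \<longleftrightarrow> open \<Omega> \<and> connected \<Omega> \<and> \<Omega> \<noteq> {} \<and>
     (\<forall>p\<in>frontier \<Omega>. \<exists>r>0. \<exists>\<nu> C (\<gamma>::'a \<Rightarrow> real).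
        norm \<nu> = 1 \<and> C-lipschitz_on {v. v \<bullet> \<nu> = 0} \<gamma> \<and>
        \<Omega> \<inter> ball p r =
          {y \<in> ball p r. (y - p) \<bullet> \<nu> > \<gamma> ((y - p) - ((y - p) \<bullet> \<nu>) *\<^sub>R \<nu>)})"

fun Ck_on :: "nat \<Rightarrow> 'a::real_normed_vector set \<Rightarrow> ('a \<Rightarrow> real) \<Rightarrow> bool" where
  "Ck_on 0 S F \<longleftrightarrow> continuous_on S F"
| "Ck_on (Suc k) S F \<longleftrightarrow> continuous_on S F \<and> (\<forall>p\<in>S. F differentiable (at p)) \<and>
      (\<forall>v. Ck_on k S (\<lambda>p. frechet_derivative F (at p) v))"

definition smooth_on :: "'a::real_normed_vector set \<Rightarrow> ('a \<Rightarrow> real) \<Rightarrow> bool" where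
  "smooth_on S F \<longleftrightarrow> open S \<and> (\<forall>k. Ck_on k S F)"

text \<open>The fibre at the parameter value \<zeta> of the tangent space:
  functions q \<mapsto> \<partial>_z\<Phi>(\<zeta>,q) w, w \<in> R^M (compared on D).\<close>
definition tangent :: "(real^'m \<Rightarrow> 'q \<Rightarrow> real) \<Rightarrow> 'q set \<Rightarrow> real^'m \<Rightarrow> ('q \<Rightarrow> real) \<Rightarrow> bool" where
  "tangent \<Phi> D \<zeta> g \<longleftrightarrow> (\<exists>w. \<forall>q\<in>D. g q = frechet_derivative (\<lambda>z. \<Phi> z q) (at \<zeta>) w)"

definition wL2 :: "'q::euclidean_space set \<Rightarrow> ('q \<Rightarrow> real) \<Rightarrow> ('q \<Rightarrow> real) \<Rightarrow> bool" where
  "wL2 D w g \<longleftrightarrow> (\<lambda>q. indicator D q * g q) \<in> borel_measurable lborel \<and>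
                  set_integrable lborel D (\<lambda>q. (g q)\<^sup>2 / w q)"

text \<open>Galerkin condition (*) at a fixed (t,x): fv = f(t,x,.), dfv = \<partial>_t f(t,x,.),
  Lfv = (L(t) f(t))(x,.).\<close>
definition galerkin :: "(real^'m \<Rightarrow> 'q \<Rightarrow> real) \<Rightarrow> 'q::euclidean_space set \<Rightarrow> real^'m
    \<Rightarrow> ('q \<Rightarrow> real) \<Rightarrow> ('q \<Rightarrow> real) \<Rightarrow> ('q \<Rightarrow> real) \<Rightarrow> bool" where
  "galerkin \<Phi> D \<zeta> fv dfv Lfv \<longleftrightarrow>
     (\<forall>\<phi>. tangent \<Phi> D \<zeta> \<phi> \<longrightarrow> (LINT q:D|lborel. \<phi> q * (dfv q - Lfv q) / fv q) = 0)"

text \<open>The projection P_f at a fixed x (with z(x) = \<zeta>), built from the basis bas m \<zeta>.\<close>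
definition projP :: "'q::euclidean_space set \<Rightarrow> ('m::finite \<Rightarrow> real^'m \<Rightarrow> 'q \<Rightarrow> real) \<Rightarrow> real^'m
    \<Rightarrow> ('q \<Rightarrow> real) \<Rightarrow> ('q \<Rightarrow> real) \<Rightarrow> 'q \<Rightarrow> real" where
  "projP D bas \<zeta> fv \<phi> q = (\<Sum>m\<in>UNIV. (LINT q':D|lborel. bas m \<zeta> q' * \<phi> q' / fv q') * bas m \<zeta> q)"

definition evolution_operator :: "real \<Rightarrow> (real \<Rightarrow> 'h::real_normed_vector \<Rightarrow> 'h) \<Rightarrow> 'h set
    \<Rightarrow> (real \<Rightarrow> real \<Rightarrow> 'h \<Rightarrow> 'h) \<Rightarrow> bool" where
  "evolution_operator T L Dom Tev \<longleftrightarrow>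
     (\<forall>t s. 0 \<le> s \<and> s \<le> t \<and> t < T \<longrightarrow> bounded_linear (Tev t s)) \<and>
     (\<forall>s. 0 \<le> s \<and> s < T \<longrightarrow> Tev s s = id) \<and>
     (\<forall>t r s. 0 \<le> s \<and> s \<le> r \<and> r \<le> t \<and> t < T \<longrightarrow> Tev t r \<circ> Tev r s = Tev t s) \<and>
     (\<forall>t s g. 0 \<le> s \<and> s \<le> t \<and> t < T \<and> g \<in> Dom \<longrightarrow> Tev t s g \<in> Dom) \<and>
     (\<forall>s g. 0 \<le> s \<and> s < T \<longrightarrow> continuous_on {s..<T} (\<lambda>t. Tev t s g)) \<and>
     (\<forall>t g. 0 \<le> t \<and> t < T \<longrightarrow> continuous_on {0..t} (\<lambda>s. Tev t s g)) \<and>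
     (\<forall>s g. 0 \<le> s \<and> s < T \<and> g \<in> Dom \<longrightarrow>
        (\<forall>t\<in>{s<..<T}. ((\<lambda>t. Tev t s g) has_vector_derivative L t (Tev t s g)) (at t))) \<and>
     (\<forall>t g. 0 \<le> t \<and> t < T \<and> g \<in> Dom \<longrightarrow>
        (\<forall>s\<in>{0<..<t}. ((\<lambda>s. Tev t s g) has_vector_derivative - Tev t s (L s g)) (at s)))"

end

theory Submission
  imports Defs
begin

definition ipw :: "'q::euclidean_space set \<Rightarrow> ('q \<Rightarrow> real) \<Rightarrow> ('q \<Rightarrow> real) \<Rightarrow> ('q \<Rightarrow> real) \<Rightarrow> real" where
  "ipw D w u v = (LINT q:D|lborel. u q * v q / w q)"

lemma wL2_prod_integrable:
  assumes Dm: "D \<in> sets lborel" and Wm: "(\<lambda>q. indicator D q * w q) \<in> borel_measurable lborel"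
    and pos: "\<And>q. q \<in> D \<Longrightarrow> w q > 0" and u: "wL2 D w u" and v: "wL2 D w v"
  shows "set_integrable lborel D (\<lambda>q. u q * v q / w q)"
proof -
  have um: "(\<lambda>q. indicator D q * u q) \<in> borel_measurable lborel" and vm: "(\<lambda>q. indicator D q * v q) \<in> borel_measurable lborel"
    using u v unfolding wL2_def by auto
  have iu: "integrable lborel (\<lambda>q. indicator D q *\<^sub>R ((u q)\<^sup>2 / w q))" and iv: "integrable lborel (\<lambda>q. indicator D q *\<^sub>R ((v q)\<^sup>2 / w q))"
    using u v unfolding wL2_def set_integrable_def by auto
  have eq: "(\<lambda>q. indicator D q *\<^sub>R (u q * v q / w q)) = (\<lambda>q. (indicator D q * u q) * (indicator D q * v q) / (indicator D q * w q))"
    by (auto simp: fun_eq_iff indicator_def)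
  show ?thesis unfolding set_integrable_def
  proof (rule Bochner_Integration.integrable_bound[OF Bochner_Integration.integrable_add[OF iu iv]])
    show "(\<lambda>q. indicator D q *\<^sub>R (u q * v q / w q)) \<in> borel_measurable lborel"
      unfolding eq by (intro borel_measurable_divide borel_measurable_times um vm Wm)
    show "AE x in lborel. norm (indicator D x *\<^sub>R (u x * v x / w x)) \<le> norm (indicator D x *\<^sub>R ((u x)\<^sup>2 / w x) + indicator D x *\<^sub>R ((v x)\<^sup>2 / w x))"
    proof (rule AE_I2)
      fix x show "norm (indicator D x *\<^sub>R (u x * v x / w x)) \<le> norm (indicator D x *\<^sub>R ((u x)\<^sup>2 / w x) + indicator D x *\<^sub>R ((v x)\<^sup>2 / w x))"
      proof (cases "x \<in> D")
        case True
        then have wp: "w x > 0" by (rule pos)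
        have "0 \<le> (\<bar>u x\<bar> - \<bar>v x\<bar>)\<^sup>2" by simp
        then have "2*(\<bar>u x\<bar>*\<bar>v x\<bar>) \<le> \<bar>u x\<bar>\<^sup>2 + \<bar>v x\<bar>\<^sup>2" by (simp add: power2_diff)
        moreover have "0 \<le> \<bar>u x\<bar>*\<bar>v x\<bar>" by simp
        moreover have "\<bar>u x * v x\<bar> = \<bar>u x\<bar> * \<bar>v x\<bar>" by (rule abs_mult)
        moreover have "\<bar>u x\<bar>\<^sup>2 = (u x)\<^sup>2" "\<bar>v x\<bar>\<^sup>2 = (v x)\<^sup>2" by simp_all
        ultimately have "\<bar>u x * v x\<bar> \<le> (u x)\<^sup>2 + (v x)\<^sup>2" by linarith
        then have "\<bar>u x * v x\<bar> / w x \<le> ((u x)\<^sup>2 + (v x)\<^sup>2) / w x" using wp by (simp add: divide_right_mono)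
        then show ?thesis using True wp by (simp add: abs_div add_divide_distrib)
      qed simp
    qed
  qed
qed

lemma wL2_lin:
  assumes u: "wL2 D w u" and v: "wL2 D w v"
    and Dm: "D \<in> sets lborel" and Wm: "(\<lambda>q. indicator D q * w q) \<in> borel_measurable lborel"
    and pos: "\<And>q. q \<in> D \<Longrightarrow> w q > 0"
  shows "wL2 D w (\<lambda>q. a * u q + b * v q)"
proof -
  have um: "(\<lambda>q. indicator D q * u q) \<in> borel_measurable lborel" and vm: "(\<lambda>q. indicator D q * v q) \<in> borel_measurable lborel"
    using u v unfolding wL2_def by auto
  have eq: "(\<lambda>q. indicator D q * (a * u q + b * v q)) = (\<lambda>q. a * (indicator D q * u q) + b * (indicator D q * v q))"
    by (auto simp: fun_eq_iff algebra_simps)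
  have m: "(\<lambda>q. indicator D q * (a * u q + b * v q)) \<in> borel_measurable lborel"
    unfolding eq by (intro borel_measurable_add borel_measurable_times borel_measurable_const um vm)
  have i1: "set_integrable lborel D (\<lambda>q. (u q)\<^sup>2 / w q)" and i2: "set_integrable lborel D (\<lambda>q. (v q)\<^sup>2 / w q)"
    using u v unfolding wL2_def by auto
  have i3: "set_integrable lborel D (\<lambda>q. u q * v q / w q)"
    by (rule wL2_prod_integrable[OF Dm Wm pos u v])
  have feq: "(\<lambda>q. (a * u q + b * v q)\<^sup>2 / w q) = (\<lambda>q. a\<^sup>2 * ((u q)\<^sup>2 / w q) + (2*a*b * (u q * v q / w q) + b\<^sup>2 * ((v q)\<^sup>2 / w q)))"
    by (rule ext) (simp add: divide_inverse power2_eq_square algebra_simps)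
  have j1: "set_integrable lborel D (\<lambda>q. a\<^sup>2 * ((u q)\<^sup>2 / w q))"
    by (rule set_integrable_mult_right) (rule i1)
  have j2: "set_integrable lborel D (\<lambda>q. b\<^sup>2 * ((v q)\<^sup>2 / w q))"
    by (rule set_integrable_mult_right) (rule i2)
  have j3: "set_integrable lborel D (\<lambda>q. 2*a*b * (u q * v q / w q))"
    by (rule set_integrable_mult_right) (rule i3)
  have "set_integrable lborel D (\<lambda>q. (a * u q + b * v q)\<^sup>2 / w q)"
    unfolding feq by (rule set_integral_add(1)[OF j1 set_integral_add(1)[OF j3 j2]])
  then show ?thesis using m unfolding wL2_def by auto
qed

lemma wL2_zero: "wL2 D w (\<lambda>q. 0)"
  unfolding wL2_def set_integrable_def by simp

lemma wL2_sum:
  assumes "finite S" and b: "\<And>m. m \<in> S \<Longrightarrow> wL2 D w (bas m)"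
    and Dm: "D \<in> sets lborel" and Wm: "(\<lambda>q. indicator D q * w q) \<in> borel_measurable lborel"
    and pos: "\<And>q. q \<in> D \<Longrightarrow> w q > 0"
  shows "wL2 D w (\<lambda>q. \<Sum>m\<in>S. c m * bas m q)"
  using assms(1,2)
proof (induction S rule: finite_induct)
  case empty then show ?case by (simp add: wL2_zero)
next
  case (insert x F)
  have "wL2 D w (\<lambda>q. c x * bas x q + 1 * (\<Sum>m\<in>F. c m * bas m q))"
    using insert by (intro wL2_lin[OF _ _ Dm Wm pos]) auto
  then show ?case using insert by simp
qed

lemma ipw_lin:
  assumes u: "wL2 D w u" and v: "wL2 D w v" and y: "wL2 D w y"
    and Dm: "D \<in> sets lborel" and Wm: "(\<lambda>q. indicator D q * w q) \<in> borel_measurable lborel"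
    and pos: "\<And>q. q \<in> D \<Longrightarrow> w q > 0"
  shows "ipw D w (\<lambda>q. a * u q + b * v q) y = a * ipw D w u y + b * ipw D w v y"
proof -
  have i1: "set_integrable lborel D (\<lambda>q. u q * y q / w q)" and i2: "set_integrable lborel D (\<lambda>q. v q * y q / w q)"
    using wL2_prod_integrable[OF Dm Wm pos] u v y by auto
  have feq: "(\<lambda>q. (a * u q + b * v q) * y q / w q) = (\<lambda>q. a * (u q * y q / w q) + b * (v q * y q / w q))"
    by (rule ext) (simp add: divide_inverse algebra_simps)
  have ia: "set_integrable lborel D (\<lambda>q. a * (u q * y q / w q))"
    by (rule set_integrable_mult_right) (rule i1)
  have ib: "set_integrable lborel D (\<lambda>q. b * (v q * y q / w q))"
    by (rule set_integrable_mult_right) (rule i2)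
  have "(LINT q:D|lborel. a * (u q * y q / w q) + b * (v q * y q / w q))
      = (LINT q:D|lborel. a * (u q * y q / w q)) + (LINT q:D|lborel. b * (v q * y q / w q))"
    by (rule set_integral_add(2)[OF ia ib])
  also have "\<dots> = a * ipw D w u y + b * ipw D w v y"
    unfolding ipw_def by (simp only: set_integral_mult_right)
  finally show ?thesis unfolding ipw_def feq .
qed

lemma ipw_sym: "ipw D w u v = ipw D w v u"
  unfolding ipw_def by (simp add: mult.commute)

lemma ipw_cong:
  assumes "D \<in> sets lborel" "\<And>q. q \<in> D \<Longrightarrow> u q = u' q" "\<And>q. q \<in> D \<Longrightarrow> v q = v' q" "\<And>q. q \<in> D \<Longrightarrow> w q = w' q"
  shows "ipw D w u v = ipw D w' u' v'"
  unfolding ipw_def using assms by (intro set_lebesgue_integral_cong) auto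

lemma ipw_sum:
  assumes "finite S" and b: "\<And>m. m \<in> S \<Longrightarrow> wL2 D w (bas m)" and y: "wL2 D w y"
    and Dm: "D \<in> sets lborel" and Wm: "(\<lambda>q. indicator D q * w q) \<in> borel_measurable lborel"
    and pos: "\<And>q. q \<in> D \<Longrightarrow> w q > 0"
  shows "ipw D w (\<lambda>q. \<Sum>m\<in>S. c m * bas m q) y = (\<Sum>m\<in>S. c m * ipw D w (bas m) y)"
  using assms(1,2)
proof (induction S rule: finite_induct)
  case empty then show ?case by (simp add: ipw_def)
next
  case (insert x F)
  have "ipw D w (\<lambda>q. c x * bas x q + 1 * (\<Sum>m\<in>F. c m * bas m q)) y = c x * ipw D w (bas x) y + 1 * ipw D w (\<lambda>q. \<Sum>m\<in>F. c m * bas m q) y"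
    using insert by (intro ipw_lin[OF _ _ y Dm Wm pos] wL2_sum[OF _ _ Dm Wm pos]) auto
  then show ?case using insert by simp
qed

lemma proj_generic:
  fixes bas :: "'m::finite \<Rightarrow> 'q::euclidean_space \<Rightarrow> real"
  assumes Dm: "D \<in> sets lborel" and Wm: "(\<lambda>q. indicator D q * w q) \<in> borel_measurable lborel"
    and pos0: "\<forall>q\<in>D. w q > 0"
    and bL2: "\<And>m. wL2 D w (bas m)"
    and orth: "\<And>m l. ipw D w (bas m) (bas l) = (if m = l then 1 else 0)"
    and Lf: "wL2 D w Lf"
    and df: "\<forall>q\<in>D. df q = (\<Sum>m\<in>UNIV. d m * bas m q)"
  shows "(\<forall>\<phi>. (\<exists>c. \<forall>q\<in>D. \<phi> q = (\<Sum>m\<in>UNIV. c m * bas m q)) \<longrightarrow> ipw D w \<phi> (\<lambda>q. df q - Lf q) = 0)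
           \<longleftrightarrow> (\<forall>m. d m = ipw D w (bas m) Lf)"
    and "(\<forall>g. (\<exists>c. \<forall>q\<in>D. g q = (\<Sum>m\<in>UNIV. c m * bas m q)) \<longrightarrow>
              (LINT q:D|lborel. (df q - Lf q)\<^sup>2 / w q) \<le> (LINT q:D|lborel. (g q - Lf q)\<^sup>2 / w q))
           \<longleftrightarrow> (\<forall>m. d m = ipw D w (bas m) Lf)"
proof -
  have pos: "\<And>q. q \<in> D \<Longrightarrow> w q > 0" using pos0 by blast
  define a where "a m = ipw D w (bas m) Lf" for m
  define K where "K = ipw D w Lf Lf - (\<Sum>m\<in>UNIV. (a m)\<^sup>2)"
  have sL2: "wL2 D w (\<lambda>q. \<Sum>m\<in>UNIV. c m * bas m q)" for c
    by (rule wL2_sum[OF _ _ Dm Wm pos]) (auto simp: bL2)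
  have GL2: "wL2 D w (\<lambda>q. 1 * (\<Sum>m\<in>UNIV. c m * bas m q) + (-1) * Lf q)" for c
    by (rule wL2_lin[OF sL2 Lf Dm Wm pos])
  have G_bas: "ipw D w (bas m) (\<lambda>q. 1 * (\<Sum>m\<in>UNIV. c m * bas m q) + (-1) * Lf q) = c m - a m" for c m
  proof -
    have "ipw D w (bas m) (\<lambda>q. 1 * (\<Sum>m\<in>UNIV. c m * bas m q) + (-1) * Lf q)
        = ipw D w (\<lambda>q. 1 * (\<Sum>m\<in>UNIV. c m * bas m q) + (-1) * Lf q) (bas m)" by (rule ipw_sym)
    also have "\<dots> = 1 * ipw D w (\<lambda>q. \<Sum>m\<in>UNIV. c m * bas m q) (bas m) + (-1) * ipw D w Lf (bas m)"
      by (rule ipw_lin[OF sL2 Lf bL2 Dm Wm pos])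
    also have "ipw D w (\<lambda>q. \<Sum>m\<in>UNIV. c m * bas m q) (bas m) = (\<Sum>l\<in>UNIV. c l * ipw D w (bas l) (bas m))"
      by (rule ipw_sum[OF _ _ bL2 Dm Wm pos]) (auto simp: bL2)
    also have "\<dots> = (\<Sum>l\<in>UNIV. (if l = m then 1 else 0) * c l)"
      by (rule sum.cong) (auto simp: orth)
    also have "\<dots> = (\<Sum>l\<in>UNIV. if l = m then c l else 0)"
      by (rule sum.cong) auto
    also have "\<dots> = c m" by simp
    finally show ?thesis by (simp add: a_def ipw_sym)
  qed
  have K1: "ipw D w (\<lambda>q. \<Sum>m\<in>UNIV. e m * bas m q) (\<lambda>q. 1 * (\<Sum>m\<in>UNIV. c m * bas m q) + (-1) * Lf q)
      = (\<Sum>m\<in>UNIV. e m * (c m - a m))" for e c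
  proof -
    have "ipw D w (\<lambda>q. \<Sum>m\<in>UNIV. e m * bas m q) (\<lambda>q. 1 * (\<Sum>m\<in>UNIV. c m * bas m q) + (-1) * Lf q)
      = (\<Sum>m\<in>UNIV. e m * ipw D w (bas m) (\<lambda>q. 1 * (\<Sum>m\<in>UNIV. c m * bas m q) + (-1) * Lf q))"
      by (rule ipw_sum[OF _ _ GL2 Dm Wm pos]) (auto simp: bL2)
    also have "\<dots> = (\<Sum>m\<in>UNIV. e m * (c m - a m))" by (simp only: G_bas)
    finally show ?thesis .
  qed
  have K2: "ipw D w (\<lambda>q. 1 * (\<Sum>m\<in>UNIV. c m * bas m q) + (-1) * Lf q) (\<lambda>q. 1 * (\<Sum>m\<in>UNIV. c m * bas m q) + (-1) * Lf q)
      = (\<Sum>m\<in>UNIV. (c m - a m)\<^sup>2) + K" for c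
  proof -
    have "ipw D w (\<lambda>q. 1 * (\<Sum>m\<in>UNIV. c m * bas m q) + (-1) * Lf q) (\<lambda>q. 1 * (\<Sum>m\<in>UNIV. c m * bas m q) + (-1) * Lf q)
       = 1 * ipw D w (\<lambda>q. \<Sum>m\<in>UNIV. c m * bas m q) (\<lambda>q. 1 * (\<Sum>m\<in>UNIV. c m * bas m q) + (-1) * Lf q)
         + (-1) * ipw D w Lf (\<lambda>q. 1 * (\<Sum>m\<in>UNIV. c m * bas m q) + (-1) * Lf q)"
      by (rule ipw_lin[OF sL2 Lf GL2 Dm Wm pos])
    also have "ipw D w Lf (\<lambda>q. 1 * (\<Sum>m\<in>UNIV. c m * bas m q) + (-1) * Lf q)
       = ipw D w (\<lambda>q. 1 * (\<Sum>m\<in>UNIV. c m * bas m q) + (-1) * Lf q) Lf" by (rule ipw_sym)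
    also have "\<dots> = 1 * ipw D w (\<lambda>q. \<Sum>m\<in>UNIV. c m * bas m q) Lf + (-1) * ipw D w Lf Lf"
      by (rule ipw_lin[OF sL2 Lf Lf Dm Wm pos])
    also have "ipw D w (\<lambda>q. \<Sum>m\<in>UNIV. c m * bas m q) Lf = (\<Sum>m\<in>UNIV. c m * a m)"
      unfolding a_def by (rule ipw_sum[OF _ _ Lf Dm Wm pos]) (auto simp: bL2)
    finally have "ipw D w (\<lambda>q. 1 * (\<Sum>m\<in>UNIV. c m * bas m q) + (-1) * Lf q) (\<lambda>q. 1 * (\<Sum>m\<in>UNIV. c m * bas m q) + (-1) * Lf q)
       = (\<Sum>m\<in>UNIV. c m * (c m - a m)) - (\<Sum>m\<in>UNIV. c m * a m) + ipw D w Lf Lf"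
      using K1[of c c] by simp
    also have "(\<Sum>m\<in>UNIV. c m * (c m - a m)) - (\<Sum>m\<in>UNIV. c m * a m) = (\<Sum>m\<in>UNIV. c m * (c m - a m) - c m * a m)"
      by (rule sum_subtractf[symmetric])
    also have "\<dots> = (\<Sum>m\<in>UNIV. (c m - a m)\<^sup>2 - (a m)\<^sup>2)"
      by (rule sum.cong) (auto simp: power2_eq_square algebra_simps)
    also have "\<dots> = (\<Sum>m\<in>UNIV. (c m - a m)\<^sup>2) - (\<Sum>m\<in>UNIV. (a m)\<^sup>2)"
      by (rule sum_subtractf)
    finally show ?thesis by (simp add: K_def)
  qed
  have tanG: "ipw D w \<phi> (\<lambda>q. g q - Lf q) = ipw D w (\<lambda>q. \<Sum>m\<in>UNIV. e m * bas m q) (\<lambda>q. 1 * (\<Sum>m\<in>UNIV. c m * bas m q) + (-1) * Lf q)"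
    if "\<forall>q\<in>D. \<phi> q = (\<Sum>m\<in>UNIV. e m * bas m q)" "\<forall>q\<in>D. g q = (\<Sum>m\<in>UNIV. c m * bas m q)" for \<phi> g e c
    using that by (intro ipw_cong[OF Dm]) auto
  have sqG: "(LINT q:D|lborel. (g q - Lf q)\<^sup>2 / w q) = ipw D w (\<lambda>q. 1 * (\<Sum>m\<in>UNIV. c m * bas m q) + (-1) * Lf q) (\<lambda>q. 1 * (\<Sum>m\<in>UNIV. c m * bas m q) + (-1) * Lf q)"
    if "\<forall>q\<in>D. g q = (\<Sum>m\<in>UNIV. c m * bas m q)" for g c
  proof -
    have "(LINT q:D|lborel. (g q - Lf q)\<^sup>2 / w q) = ipw D w (\<lambda>q. g q - Lf q) (\<lambda>q. g q - Lf q)"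
      unfolding ipw_def by (simp add: power2_eq_square)
    also have "\<dots> = ipw D w (\<lambda>q. 1 * (\<Sum>m\<in>UNIV. c m * bas m q) + (-1) * Lf q) (\<lambda>q. 1 * (\<Sum>m\<in>UNIV. c m * bas m q) + (-1) * Lf q)"
      using that by (intro ipw_cong[OF Dm]) auto
    finally show ?thesis .
  qed
  have delta1: "(\<Sum>l\<in>UNIV. (if l = m then 1 else 0) * x l) = (x m :: real)" for m :: 'm and x
  proof -
    have "(\<Sum>l\<in>UNIV. (if l = m then 1 else 0) * x l) = (\<Sum>l\<in>UNIV. if l = m then x l else 0)"
      by (rule sum.cong) auto
    then show ?thesis by simp
  qed
  have zero_iff: "(\<forall>\<phi>. (\<exists>c. \<forall>q\<in>D. \<phi> q = (\<Sum>m\<in>UNIV. c m * bas m q)) \<longrightarrow> ipw D w \<phi> (\<lambda>q. df q - Lf q) = 0)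
           \<longleftrightarrow> d = a"
  proof
    assume H: "\<forall>\<phi>. (\<exists>c. \<forall>q\<in>D. \<phi> q = (\<Sum>m\<in>UNIV. c m * bas m q)) \<longrightarrow> ipw D w \<phi> (\<lambda>q. df q - Lf q) = 0"
    show "d = a"
    proof
      fix m
      have bm: "\<forall>q\<in>D. bas m q = (\<Sum>l\<in>UNIV. (if l = m then 1 else 0) * bas l q)" by (simp add: delta1)
      then have "\<exists>c. \<forall>q\<in>D. bas m q = (\<Sum>l\<in>UNIV. c l * bas l q)" by (rule exI[where x="\<lambda>l. if l = m then 1 else 0"])
      with H have "ipw D w (bas m) (\<lambda>q. df q - Lf q) = 0" by blast
      moreover have "ipw D w (bas m) (\<lambda>q. df q - Lf q) = (\<Sum>l\<in>UNIV. (if l = m then 1 else 0) * (d l - a l))"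
        unfolding tanG[OF bm df] K1 ..
      ultimately show "d m = a m" by (simp add: delta1)
    qed
  next
    assume da: "d = a"
    show "\<forall>\<phi>. (\<exists>c. \<forall>q\<in>D. \<phi> q = (\<Sum>m\<in>UNIV. c m * bas m q)) \<longrightarrow> ipw D w \<phi> (\<lambda>q. df q - Lf q) = 0"
    proof (intro allI impI)
      fix \<phi> assume "\<exists>c. \<forall>q\<in>D. \<phi> q = (\<Sum>m\<in>UNIV. c m * bas m q)"
      then obtain e where e: "\<forall>q\<in>D. \<phi> q = (\<Sum>m\<in>UNIV. e m * bas m q)" by blast
      show "ipw D w \<phi> (\<lambda>q. df q - Lf q) = 0" unfolding tanG[OF e df] K1 da by simp
    qed
  qed
  have min_iff: "(\<forall>g. (\<exists>c. \<forall>q\<in>D. g q = (\<Sum>m\<in>UNIV. c m * bas m q)) \<longrightarrow>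
              (LINT q:D|lborel. (df q - Lf q)\<^sup>2 / w q) \<le> (LINT q:D|lborel. (g q - Lf q)\<^sup>2 / w q))
           \<longleftrightarrow> d = a"
  proof
    assume H: "\<forall>g. (\<exists>c. \<forall>q\<in>D. g q = (\<Sum>m\<in>UNIV. c m * bas m q)) \<longrightarrow>
              (LINT q:D|lborel. (df q - Lf q)\<^sup>2 / w q) \<le> (LINT q:D|lborel. (g q - Lf q)\<^sup>2 / w q)"
    have ga: "\<forall>q\<in>D. (\<Sum>m\<in>UNIV. a m * bas m q) = (\<Sum>m\<in>UNIV. a m * bas m q)" by simp
    then have "\<exists>c. \<forall>q\<in>D. (\<Sum>m\<in>UNIV. a m * bas m q) = (\<Sum>m\<in>UNIV. c m * bas m q)" by (rule exI[where x=a])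
    then have "(LINT q:D|lborel. (df q - Lf q)\<^sup>2 / w q) \<le> (LINT q:D|lborel. ((\<Sum>m\<in>UNIV. a m * bas m q) - Lf q)\<^sup>2 / w q)"
      by (rule H[rule_format, of "\<lambda>q. \<Sum>m\<in>UNIV. a m * bas m q"])
    then have "(\<Sum>m\<in>UNIV. (d m - a m)\<^sup>2) + K \<le> (\<Sum>m\<in>UNIV. (a m - a m)\<^sup>2) + K"
      unfolding sqG[OF df] sqG[OF ga] K2 .
    then have "(\<Sum>m\<in>UNIV. (d m - a m)\<^sup>2) \<le> 0" by simp
    then have "(\<Sum>m\<in>UNIV. (d m - a m)\<^sup>2) = 0" using sum_nonneg[of UNIV "\<lambda>m. (d m - a m)\<^sup>2"] by simp
    then have "\<forall>m\<in>UNIV. (d m - a m)\<^sup>2 = 0" by (subst (asm) sum_nonneg_eq_0_iff) auto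
    then show "d = a" by (auto simp: fun_eq_iff)
  next
    assume da: "d = a"
    show "\<forall>g. (\<exists>c. \<forall>q\<in>D. g q = (\<Sum>m\<in>UNIV. c m * bas m q)) \<longrightarrow>
              (LINT q:D|lborel. (df q - Lf q)\<^sup>2 / w q) \<le> (LINT q:D|lborel. (g q - Lf q)\<^sup>2 / w q)"
    proof (intro allI impI)
      fix g assume "\<exists>c. \<forall>q\<in>D. g q = (\<Sum>m\<in>UNIV. c m * bas m q)"
      then obtain c where c: "\<forall>q\<in>D. g q = (\<Sum>m\<in>UNIV. c m * bas m q)" by blast
      have "(\<Sum>m\<in>UNIV. (a m - a m)\<^sup>2) + K \<le> (\<Sum>m\<in>UNIV. (c m - a m)\<^sup>2) + K"
        by (simp add: sum_nonneg)
      then show "(LINT q:D|lborel. (df q - Lf q)\<^sup>2 / w q) \<le> (LINT q:D|lborel. (g q - Lf q)\<^sup>2 / w q)"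
        unfolding sqG[OF df] sqG[OF c] K2 da .
    qed
  qed
  have da_iff: "d = a \<longleftrightarrow> (\<forall>m. d m = ipw D w (bas m) Lf)" by (auto simp: a_def fun_eq_iff)
  show "(\<forall>\<phi>. (\<exists>c. \<forall>q\<in>D. \<phi> q = (\<Sum>m\<in>UNIV. c m * bas m q)) \<longrightarrow> ipw D w \<phi> (\<lambda>q. df q - Lf q) = 0)
           \<longleftrightarrow> (\<forall>m. d m = ipw D w (bas m) Lf)"
    using zero_iff da_iff by blast
  show "(\<forall>g. (\<exists>c. \<forall>q\<in>D. g q = (\<Sum>m\<in>UNIV. c m * bas m q)) \<longrightarrow>
              (LINT q:D|lborel. (df q - Lf q)\<^sup>2 / w q) \<le> (LINT q:D|lborel. (g q - Lf q)\<^sup>2 / w q))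
           \<longleftrightarrow> (\<forall>m. d m = ipw D w (bas m) Lf)"
    using min_iff da_iff by blast
qed

lemma Phi_diff:
  assumes sm: "smooth_on (Z \<times> D) (\<lambda>p. \<Phi> (fst p) (snd p))" and z: "\<zeta> \<in> Z" and q: "q \<in> D"
  shows "linear (frechet_derivative (\<lambda>z. \<Phi> z q) (at \<zeta>))"
proof -
  have "Ck_on (Suc 0) (Z \<times> D) (\<lambda>p. \<Phi> (fst p) (snd p))" using sm unfolding smooth_on_def by blast
  then have d: "(\<lambda>p. \<Phi> (fst p) (snd p)) differentiable (at (\<zeta>, q))" using z q by auto
  have p: "(\<lambda>z. (z, q)) differentiable (at \<zeta>)"
    by (rule differentiableI, rule has_derivative_Pair[OF has_derivative_ident has_derivative_const])
  have "((\<lambda>p. \<Phi> (fst p) (snd p)) \<circ> (\<lambda>z. (z, q))) differentiable (at \<zeta>)"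
    by (rule differentiable_chain_at[OF p]) (simp add: d)
  then have "(\<lambda>z. \<Phi> z q) differentiable (at \<zeta>)" by (simp add: o_def)
  then have "((\<lambda>z. \<Phi> z q) has_derivative frechet_derivative (\<lambda>z. \<Phi> z q) (at \<zeta>)) (at \<zeta>)"
    using frechet_derivative_works by blast
  then show ?thesis using has_derivative_linear by blast
qed

lemma tangent_iff:
  fixes \<Phi> :: "real^'m::finite \<Rightarrow> 'q::euclidean_space \<Rightarrow> real" and bas :: "'m \<Rightarrow> real^'m \<Rightarrow> 'q \<Rightarrow> real"
  assumes sm: "smooth_on (Z \<times> D) (\<lambda>p. \<Phi> (fst p) (snd p))" and z: "\<zeta> \<in> Z"
    and bt: "\<And>m. tangent \<Phi> D \<zeta> (bas m \<zeta>)"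
    and sp: "\<And>g. tangent \<Phi> D \<zeta> g \<Longrightarrow> \<exists>c. \<forall>q\<in>D. g q = (\<Sum>m\<in>UNIV. c m * bas m \<zeta> q)"
  shows "tangent \<Phi> D \<zeta> g \<longleftrightarrow> (\<exists>c. \<forall>q\<in>D. g q = (\<Sum>m\<in>UNIV. c m * bas m \<zeta> q))"
proof
  assume "tangent \<Phi> D \<zeta> g" then show "\<exists>c. \<forall>q\<in>D. g q = (\<Sum>m\<in>UNIV. c m * bas m \<zeta> q)" by (rule sp)
next
  assume "\<exists>c. \<forall>q\<in>D. g q = (\<Sum>m\<in>UNIV. c m * bas m \<zeta> q)"
  then obtain c where c: "\<forall>q\<in>D. g q = (\<Sum>m\<in>UNIV. c m * bas m \<zeta> q)" by blast
  have "\<forall>m. \<exists>w. \<forall>q\<in>D. bas m \<zeta> q = frechet_derivative (\<lambda>z. \<Phi> z q) (at \<zeta>) w"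
    using bt unfolding tangent_def by blast
  then have "\<exists>W. \<forall>m. \<forall>q\<in>D. bas m \<zeta> q = frechet_derivative (\<lambda>z. \<Phi> z q) (at \<zeta>) (W m)"
    by (rule choice)
  then obtain W where W: "\<And>m q. q \<in> D \<Longrightarrow> bas m \<zeta> q = frechet_derivative (\<lambda>z. \<Phi> z q) (at \<zeta>) (W m)"
    by blast
  show "tangent \<Phi> D \<zeta> g" unfolding tangent_def
  proof (intro exI ballI)
    fix q assume q: "q \<in> D"
    have l: "linear (frechet_derivative (\<lambda>z. \<Phi> z q) (at \<zeta>))" by (rule Phi_diff[OF sm z q])
    have "frechet_derivative (\<lambda>z. \<Phi> z q) (at \<zeta>) (\<Sum>m\<in>UNIV. c m *\<^sub>R W m)
       = (\<Sum>m\<in>UNIV. c m * frechet_derivative (\<lambda>z. \<Phi> z q) (at \<zeta>) (W m))"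
      by (simp only: linear_sum[OF l] linear_scale[OF l] real_scaleR_def)
    also have "\<dots> = g q" using c q W by simp
    finally show "g q = frechet_derivative (\<lambda>z. \<Phi> z q) (at \<zeta>) (\<Sum>m\<in>UNIV. c m *\<^sub>R W m)" by simp
  qed
qed

lemma AE_prod_fst:
  fixes P :: "'a::euclidean_space \<Rightarrow> 'b::euclidean_space \<Rightarrow> bool"
  assumes "AE p in lborel. P (fst p) (snd p)"
  shows "AE t in lborel. AE x in lborel. P t x"
proof -
  have "AE p in (lborel \<Otimes>\<^sub>M lborel :: ('a \<times> 'b) measure). P (fst p) (snd p)"
    using assms by (subst lborel_prod)
  from lborel_pair.AE_pair[OF this] show ?thesis by simp
qed

lemma AE_prod_snd:
  fixes P :: "'a::euclidean_space \<Rightarrow> 'b::euclidean_space \<Rightarrow> bool"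
  assumes "AE p in lborel. P (fst p) (snd p)"
  shows "AE x in lborel. AE t in lborel. P t x"
proof -
  have "AE p in (lborel \<Otimes>\<^sub>M lborel :: ('a \<times> 'b) measure). P (fst p) (snd p)"
    using assms by (subst lborel_prod)
  then obtain N where N: "{p \<in> space (lborel \<Otimes>\<^sub>M lborel). \<not> P (fst p) (snd p)} \<subseteq> N"
    "emeasure (lborel \<Otimes>\<^sub>M lborel :: ('a \<times> 'b) measure) N = 0" "N \<in> sets (lborel \<Otimes>\<^sub>M lborel :: ('a \<times> 'b) measure)"
    by (rule AE_E)
  have "AE p in (lborel \<Otimes>\<^sub>M lborel :: ('a \<times> 'b) measure). p \<notin> N"
    using N by (intro AE_not_in) auto
  from lborel_pair.AE_pair[OF this] have 1: "AE t in lborel. AE x in lborel. (t, x) \<notin> N" by simp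
  have ms: "{p \<in> space (lborel \<Otimes>\<^sub>M lborel :: ('a \<times> 'b) measure). (fst p, snd p) \<notin> N} \<in> sets (lborel \<Otimes>\<^sub>M lborel)"
  proof -
    have "{p \<in> space (lborel \<Otimes>\<^sub>M lborel :: ('a \<times> 'b) measure). (fst p, snd p) \<notin> N} = space (lborel \<Otimes>\<^sub>M lborel) - N"
      by auto
    then show ?thesis using sets.compl_sets[OF N(3)] by (simp only:)
  qed
  have "AE x in lborel. AE t in lborel. (t, x) \<notin> N"
    using 1 lborel_pair.AE_commute[OF ms] by simp
  have N2: "\<And>t x. \<not> P t x \<Longrightarrow> (t, x) \<in> N" using N(1) by (auto simp: space_pair_measure)
  show ?thesis
    using \<open>AE x in lborel. AE t in lborel. (t, x) \<notin> N\<close>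
  proof (rule eventually_mono)
    fix x assume "AE t in lborel. (t, x) \<notin> N"
    then show "AE t in lborel. P t x" by (rule eventually_mono) (use N2 in blast)
  qed
qed

lemma AE_lift_prod:
  fixes E :: "'a::euclidean_space \<Rightarrow> 'b::euclidean_space \<Rightarrow> bool"
  assumes "AE x in lborel. x \<in> \<Omega> \<longrightarrow> (\<forall>q\<in>D. E x q)"
  shows "AE p in lborel. p \<in> \<Omega> \<times> D \<longrightarrow> E (fst p) (snd p)"
proof -
  obtain N where N: "{x \<in> space lborel. \<not> (x \<in> \<Omega> \<longrightarrow> (\<forall>q\<in>D. E x q))} \<subseteq> N" "emeasure lborel N = 0" "N \<in> sets lborel"
    using assms by (rule AE_E)
  have N1: "\<And>a b. a \<in> \<Omega> \<Longrightarrow> b \<in> D \<Longrightarrow> \<not> E a b \<Longrightarrow> a \<in> N" using N(1) by auto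
  have "N \<times> UNIV \<in> null_sets (lborel \<Otimes>\<^sub>M lborel :: ('a \<times> 'b) measure)"
    using N by (intro sigma_finite_measure.times_in_null_sets1[OF sigma_finite_lborel]) auto
  then have "AE p in (lborel \<Otimes>\<^sub>M lborel :: ('a \<times> 'b) measure). p \<in> \<Omega> \<times> D \<longrightarrow> E (fst p) (snd p)"
    by (rule AE_I') (auto dest: N1)
  then show ?thesis by (subst (asm) lborel_prod)
qed

lemma AE_negligible:
  assumes "AE t in lborel. P (t::real)"
  shows "negligible {t. \<not> P t}"
proof -
  obtain N where N: "{x \<in> space lborel. \<not> P x} \<subseteq> N" "emeasure lborel N = 0" "N \<in> sets lborel"
    using assms by (rule AE_E)
  have "N \<in> null_sets lebesgue" using N by (intro null_sets_completionI) auto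
  then have "negligible N" by (simp add: negligible_iff_null_sets)
  then show ?thesis by (rule negligible_subset) (use N(1) in auto)
qed

lemma unif_bound:
  fixes Tf :: "real \<Rightarrow> 'h::{real_normed_vector, complete_space} \<Rightarrow> 'h"
  assumes lin: "\<And>s. s \<in> K \<Longrightarrow> bounded_linear (Tf s)"
    and cont: "\<And>g. continuous_on K (\<lambda>s. Tf s g)" and K: "compact K"
  shows "\<exists>B. \<forall>s\<in>K. \<forall>g. norm (Tf s g) \<le> B * norm g"
proof -
  define E where "E n = {g. \<forall>s\<in>K. norm (Tf s g) \<le> real n}" for n :: nat
  have clE: "closed (E n)" for n
  proof -
    have "E n = (\<Inter>s\<in>K. {g. norm (Tf s g) \<le> real n})" by (auto simp: E_def)
    moreover have "closed {g. norm (Tf s g) \<le> real n}" if "s \<in> K" for s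
      by (intro closed_Collect_le continuous_on_norm linear_continuous_on lin that continuous_on_const)
    ultimately show ?thesis by auto
  qed
  have cov: "\<Union>(range E) = UNIV"
  proof -
    have "\<exists>n. g \<in> E n" for g
    proof -
      have "compact ((\<lambda>s. Tf s g) ` K)" by (rule compact_continuous_image[OF cont K])
      then obtain B where B: "\<And>y. y \<in> (\<lambda>s. Tf s g) ` K \<Longrightarrow> norm y \<le> B"
        using compact_imp_bounded bounded_iff by metis
      have "g \<in> E (nat \<lceil>B\<rceil>)" unfolding E_def using B
        by (auto intro: order_trans[OF _ real_nat_ceiling_ge])
      then show ?thesis by blast
    qed
    then show ?thesis by blast
  qed
  have "\<exists>n. interior (E n) \<noteq> {}"
  proof (rule ccontr)
    assume "\<not> (\<exists>n. interior (E n) \<noteq> {})"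
    then have "euclidean interior_of \<Union>(range E) = {}"
      by (intro Baire_category_alt) (auto simp: completely_metrizable_space_euclidean clE closed_closedin[symmetric])
    then show False using cov by simp
  qed
  then obtain n x0 where "x0 \<in> interior (E n)" by blast
  then obtain r where r: "r > 0" "ball x0 r \<subseteq> E n" by (auto simp: mem_interior)
  show ?thesis
  proof (intro exI ballI allI)
    fix s g assume s: "s \<in> K"
    interpret bl: bounded_linear "Tf s" by (rule lin[OF s])
    show "norm (Tf s g) \<le> (4 * real n / r) * norm g"
    proof (cases "g = 0")
      case True then show ?thesis by simp
    next
      case False
      define c where "c = r / (2 * norm g)"
      have c: "c > 0" using False r by (simp add: c_def)
      have "x0 + c *\<^sub>R g \<in> ball x0 r" using False r by (simp add: c_def dist_norm)
      then have y: "norm (Tf s (x0 + c *\<^sub>R g)) \<le> real n" using r s by (auto simp: E_def)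
      have "x0 \<in> ball x0 r" using r by simp
      then have x: "norm (Tf s x0) \<le> real n" using r(2) s unfolding E_def by blast
      have "c * norm (Tf s g) = norm (Tf s (x0 + c *\<^sub>R g) - Tf s x0)"
        using c by (simp add: bl.add bl.scaleR)
      also have "\<dots> \<le> 2 * real n" using y x norm_triangle_ineq4[of "Tf s (x0 + c *\<^sub>R g)" "Tf s x0"] by linarith
      finally have "c * norm (Tf s g) \<le> 2 * real n" .
      then have "norm (Tf s g) \<le> 2 * real n / c" using c by (simp add: field_simps)
      also have "2 * real n / c = (4 * real n / r) * norm g" using False r by (simp add: c_def field_simps)
      finally show ?thesis .
    qed
  qed
qed

lemma evo_cont:
  fixes Tf :: "real \<Rightarrow> 'h::real_normed_vector \<Rightarrow> 'h"
  assumes bound: "\<And>s g. s \<in> {0..t} \<Longrightarrow> norm (Tf s g) \<le> B * norm g"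
    and lin: "\<And>s. s \<in> {0..t} \<Longrightarrow> bounded_linear (Tf s)"
    and cont: "\<And>g. continuous_on {0..t} (\<lambda>s. Tf s g)"
    and hc: "continuous_on {0..t} h"
  shows "continuous_on {0..t} (\<lambda>s. Tf s (h s))"
  unfolding continuous_on_def
proof (intro ballI)
  fix y0 assume y0: "y0 \<in> {0..t}"
  let ?F = "at y0 within {0..t}"
  have ev: "eventually (\<lambda>y. y \<in> {0..t}) ?F" by (auto simp: eventually_at_filter)
  have h0: "((\<lambda>y. h y - h y0) \<longlongrightarrow> 0) ?F"
    using hc y0 unfolding continuous_on_def by (simp add: LIM_zero)
  have t1: "((\<lambda>y. Tf y (h y - h y0)) \<longlongrightarrow> 0) ?F"
  proof (rule Lim_null_comparison)
    show "eventually (\<lambda>y. norm (Tf y (h y - h y0)) \<le> B * norm (h y - h y0)) ?F"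
      using ev by eventually_elim (rule bound)
    show "((\<lambda>y. B * norm (h y - h y0)) \<longlongrightarrow> 0) ?F"
      using tendsto_mult_right_zero[OF tendsto_norm_zero[OF h0]] by simp
  qed
  have t2: "((\<lambda>y. Tf y (h y0)) \<longlongrightarrow> Tf y0 (h y0)) ?F"
    using cont[of "h y0"] y0 unfolding continuous_on_def by blast
  have "((\<lambda>y. Tf y (h y - h y0) + Tf y (h y0)) \<longlongrightarrow> 0 + Tf y0 (h y0)) ?F"
    by (rule tendsto_add[OF t1 t2])
  moreover have "eventually (\<lambda>y. Tf y (h y - h y0) + Tf y (h y0) = Tf y (h y)) ?F"
    using ev by eventually_elim (simp add: linear_diff[OF bounded_linear.linear[OF lin]])
  ultimately show "((\<lambda>s. Tf s (h s)) \<longlongrightarrow> Tf y0 (h y0)) ?F"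
    by (simp add: Lim_transform_eventually)
qed

lemma evo_deriv:
  fixes Tf :: "real \<Rightarrow> 'h::real_normed_vector \<Rightarrow> 'h"
  assumes bound: "\<And>s g. s \<in> {0..t} \<Longrightarrow> norm (Tf s g) \<le> B * norm g"
    and lin: "\<And>s. s \<in> {0..t} \<Longrightarrow> bounded_linear (Tf s)"
    and cont: "\<And>g. continuous_on {0..t} (\<lambda>s. Tf s g)"
    and s: "s \<in> {0<..<t}"
    and hd: "(h has_vector_derivative h') (at s)"
    and AD: "((\<lambda>y. Tf y (h s)) has_vector_derivative A) (at s)"
  shows "((\<lambda>y. Tf y (h y)) has_vector_derivative (A + Tf s h')) (at s)"
proof -
  have ev: "eventually (\<lambda>y. y \<in> {0<..<t}) (at s)"
    using s by (intro eventually_at_in_open') auto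
  have s0: "s \<in> {0..t}" using s by auto
  have Gd: "((\<lambda>y. Tf y (h y - h s)) has_vector_derivative Tf s h') (at s)"
    unfolding has_vector_derivative_def has_derivative_at_within
  proof (intro conjI)
    show "bounded_linear (\<lambda>x. x *\<^sub>R Tf s h')" by (rule bounded_linear_scaleR_left)
    have hdd: "((\<lambda>y. ((h y - h s) - (y - s) *\<^sub>R h') /\<^sub>R norm (y - s)) \<longlongrightarrow> 0) (at s)"
      using hd unfolding has_vector_derivative_def has_derivative_at_within by simp
    have cs: "((\<lambda>y. Tf y h' - Tf s h') \<longlongrightarrow> 0) (at s)"
    proof -
      have "continuous (at s) (\<lambda>y. Tf y h')"
        using continuous_on_interior[OF cont[of h']] s by simp
      then show ?thesis by (simp add: continuous_at LIM_zero)
    qed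
    show "((\<lambda>y. (Tf y (h y - h s) - Tf s (h s - h s) - (y - s) *\<^sub>R Tf s h') /\<^sub>R norm (y - s)) \<longlongrightarrow> 0) (at s)"
    proof (rule Lim_null_comparison)
      show "((\<lambda>y. B * norm (((h y - h s) - (y - s) *\<^sub>R h') /\<^sub>R norm (y - s)) + norm (Tf y h' - Tf s h')) \<longlongrightarrow> 0) (at s)"
        using tendsto_add[OF tendsto_mult_right_zero[OF tendsto_norm_zero[OF hdd]] tendsto_norm_zero[OF cs]]
        by simp
      show "eventually (\<lambda>y. norm ((Tf y (h y - h s) - Tf s (h s - h s) - (y - s) *\<^sub>R Tf s h') /\<^sub>R norm (y - s))
              \<le> B * norm (((h y - h s) - (y - s) *\<^sub>R h') /\<^sub>R norm (y - s)) + norm (Tf y h' - Tf s h')) (at s)"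
        using ev
      proof eventually_elim
        case (elim y)
        then have y0: "y \<in> {0..t}" by auto
        interpret ly: bounded_linear "Tf y" by (rule lin[OF y0])
        interpret ls: bounded_linear "Tf s" by (rule lin[OF s0])
        have eq: "Tf y (h y - h s) - Tf s (h s - h s) - (y - s) *\<^sub>R Tf s h'
            = Tf y ((h y - h s) - (y - s) *\<^sub>R h') + (y - s) *\<^sub>R (Tf y h' - Tf s h')"
          by (simp only: ly.diff ly.scaleR diff_self ls.zero scaleR_diff_right) (simp add: algebra_simps)
        show ?case
        proof (cases "y = s")
          case True
          then show ?thesis by simp
        next
          case False
          then have n: "norm (y - s) > 0" by simp
          have "norm ((Tf y (h y - h s) - Tf s (h s - h s) - (y - s) *\<^sub>R Tf s h') /\<^sub>R norm (y - s))
              = norm (Tf y ((h y - h s) - (y - s) *\<^sub>R h') /\<^sub>R norm (y - s) + ((y - s) / norm (y - s)) *\<^sub>R (Tf y h' - Tf s h'))"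
            unfolding eq by (simp add: scaleR_add_right divide_inverse_commute)
          also have "\<dots> \<le> norm (Tf y ((h y - h s) - (y - s) *\<^sub>R h') /\<^sub>R norm (y - s)) + norm (((y - s) / norm (y - s)) *\<^sub>R (Tf y h' - Tf s h'))"
            by (rule norm_triangle_ineq)
          also have "norm (((y - s) / norm (y - s)) *\<^sub>R (Tf y h' - Tf s h')) = norm (Tf y h' - Tf s h')"
            using n by simp
          also have "norm (Tf y ((h y - h s) - (y - s) *\<^sub>R h') /\<^sub>R norm (y - s)) = norm (Tf y (((h y - h s) - (y - s) *\<^sub>R h') /\<^sub>R norm (y - s)))"
            by (simp add: ly.scaleR)
          also have "\<dots> \<le> B * norm (((h y - h s) - (y - s) *\<^sub>R h') /\<^sub>R norm (y - s))"
            by (rule bound[OF y0])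
          finally show ?thesis by simp
        qed
      qed
    qed
  qed
  have "((\<lambda>y. Tf y (h s) + Tf y (h y - h s)) has_vector_derivative (A + Tf s h')) (at s)"
    by (rule has_vector_derivative_add[OF AD Gd])
  then show ?thesis
  proof (rule has_vector_derivative_transform_within_open[where S = "{0<..<t}"])
    show "open {0<..<t}" by simp
    show "s \<in> {0<..<t}" by (rule s)
    fix y assume "y \<in> {0<..<t}"
    then have y0: "y \<in> {0..t}" by auto
    show "Tf y (h s) + Tf y (h y - h s) = Tf y (h y)"
      by (simp add: linear_diff[OF bounded_linear.linear[OF lin[OF y0]]])
  qed
qed

lemma wL2_cong:
  assumes "\<And>q. q \<in> D \<Longrightarrow> w q = w' q"
  shows "wL2 D w g \<longleftrightarrow> wL2 D w' g"
proof -
  have "set_integrable lborel D (\<lambda>q. (g q)\<^sup>2 / w q) = set_integrable lborel D (\<lambda>q. (g q)\<^sup>2 / w' q)"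
    by (rule set_integrable_cong) (auto simp: assms)
  then show ?thesis unfolding wL2_def by simp
qed

lemma pointwise_facts:
  fixes \<Phi> :: "real^'m::finite \<Rightarrow> 'q::euclidean_space \<Rightarrow> real" and bas :: "'m \<Rightarrow> real^'m \<Rightarrow> 'q \<Rightarrow> real"
  assumes open_D: "open D"
    and sm: "smooth_on (Z \<times> D) (\<lambda>p. \<Phi> (fst p) (snd p))" and z: "\<zeta> \<in> Z"
    and \<Phi>_pos: "\<And>\<zeta> q. \<zeta> \<in> Z \<Longrightarrow> q \<in> D \<Longrightarrow> \<Phi> \<zeta> q > 0"
    and bas_tangent: "\<And>\<zeta> m. \<zeta> \<in> Z \<Longrightarrow> tangent \<Phi> D \<zeta> (bas m \<zeta>) \<and> wL2 D (\<Phi> \<zeta>) (bas m \<zeta>)"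
    and bas_orthonormal: "\<And>\<zeta> m l. \<zeta> \<in> Z \<Longrightarrow>
                   (LINT q:D|lborel. bas m \<zeta> q * bas l \<zeta> q / \<Phi> \<zeta> q) = (if m = l then 1 else 0)"
    and bas_spans: "\<And>\<zeta> g. \<zeta> \<in> Z \<Longrightarrow> tangent \<Phi> D \<zeta> g \<Longrightarrow>
                   \<exists>c. \<forall>q\<in>D. g q = (\<Sum>m\<in>UNIV. c m * bas m \<zeta> q)"
    and fv: "\<And>q. q \<in> D \<Longrightarrow> fv q = \<Phi> \<zeta> q"
    and Lf: "wL2 D fv Lf"
  shows "tangent \<Phi> D \<zeta> df \<Longrightarrow> (galerkin \<Phi> D \<zeta> fv df Lf \<longleftrightarrow>
           (\<forall>g. tangent \<Phi> D \<zeta> g \<longrightarrow>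
              (LINT q:D|lborel. (df q - Lf q)\<^sup>2 / fv q) \<le> (LINT q:D|lborel. (g q - Lf q)\<^sup>2 / fv q)))"
    and "(tangent \<Phi> D \<zeta> df \<and> galerkin \<Phi> D \<zeta> fv df Lf) \<longleftrightarrow> (\<forall>q\<in>D. df q = projP D bas \<zeta> fv Lf q)"
    and "tangent \<Phi> D \<zeta> fv \<Longrightarrow> tangent \<Phi> D \<zeta> df \<Longrightarrow> galerkin \<Phi> D \<zeta> fv df Lf \<Longrightarrow> set_integrable lborel D Lf \<Longrightarrow>
         (LINT q:D|lborel. df q) = (LINT q:D|lborel. Lf q)"
proof -
  have Dm: "D \<in> sets lborel" using open_D by simp
  have pos: "\<And>q. q \<in> D \<Longrightarrow> fv q > 0" using fv \<Phi>_pos[OF z] by simp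
  have pos0: "\<forall>q\<in>D. fv q > 0" using pos by blast
  have "Ck_on 0 (Z \<times> D) (\<lambda>p. \<Phi> (fst p) (snd p))" using sm unfolding smooth_on_def by blast
  then have c2: "continuous_on (Z \<times> D) (\<lambda>p. \<Phi> (fst p) (snd p))" by simp
  have "continuous_on D (\<lambda>q. \<Phi> \<zeta> q)"
    by (rule continuous_on_compose2[OF c2, of D "\<lambda>q. (\<zeta>, q)", simplified]) (auto intro!: continuous_intros simp: z)
  then have "(\<lambda>q. indicator D q *\<^sub>R \<Phi> \<zeta> q) \<in> borel_measurable borel"
    using open_D by (intro borel_measurable_continuous_on_indicator) auto
  moreover have "(\<lambda>q. indicator D q *\<^sub>R \<Phi> \<zeta> q) = (\<lambda>q. indicator D q * fv q)"
    using fv by (auto simp: fun_eq_iff indicator_def)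
  ultimately have Wm: "(\<lambda>q. indicator D q * fv q) \<in> borel_measurable lborel" by simp
  have bL2: "wL2 D fv (bas m \<zeta>)" for m
  proof -
    have "wL2 D (\<Phi> \<zeta>) (bas m \<zeta>)" using bas_tangent[OF z] by blast
    moreover have "wL2 D fv (bas m \<zeta>) \<longleftrightarrow> wL2 D (\<Phi> \<zeta>) (bas m \<zeta>)" by (rule wL2_cong) (rule fv)
    ultimately show ?thesis by simp
  qed
  have orth: "\<And>m l. ipw D fv (bas m \<zeta>) (bas l \<zeta>) = (if m = l then 1 else 0)"
  proof -
    fix m l
    have "ipw D fv (bas m \<zeta>) (bas l \<zeta>) = ipw D (\<Phi> \<zeta>) (bas m \<zeta>) (bas l \<zeta>)"
      using fv by (intro ipw_cong[OF Dm]) auto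
    then show "ipw D fv (bas m \<zeta>) (bas l \<zeta>) = (if m = l then 1 else 0)"
      using bas_orthonormal[OF z] by (simp add: ipw_def)
  qed
  have tan: "\<And>g. tangent \<Phi> D \<zeta> g \<longleftrightarrow> (\<exists>c. \<forall>q\<in>D. g q = (\<Sum>m\<in>UNIV. c m * bas m \<zeta> q))"
  proof -
    fix g
    have bt: "\<And>m. tangent \<Phi> D \<zeta> (bas m \<zeta>)" using bas_tangent[OF z] by blast
    show "tangent \<Phi> D \<zeta> g \<longleftrightarrow> (\<exists>c. \<forall>q\<in>D. g q = (\<Sum>m\<in>UNIV. c m * bas m \<zeta> q))"
      by (rule tangent_iff[where bas=bas and \<zeta>=\<zeta> and \<Phi>=\<Phi> and D=D and Z=Z, OF sm z bt bas_spans[OF z]])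
  qed
  have gal: "galerkin \<Phi> D \<zeta> fv df Lf \<longleftrightarrow>
      (\<forall>\<phi>. (\<exists>c. \<forall>q\<in>D. \<phi> q = (\<Sum>m\<in>UNIV. c m * bas m \<zeta> q)) \<longrightarrow> ipw D fv \<phi> (\<lambda>q. df q - Lf q) = 0)"
    unfolding galerkin_def tan ipw_def ..
  have proj: "projP D bas \<zeta> fv Lf q = (\<Sum>m\<in>UNIV. ipw D fv (bas m \<zeta>) Lf * bas m \<zeta> q)" for q
    unfolding projP_def ipw_def ..
  note PG = proj_generic[where D=D and w=fv and bas="\<lambda>m. bas m \<zeta>" and Lf=Lf, OF Dm Wm pos0 bL2 orth Lf]
  have triv: "\<And>q. q \<in> D \<Longrightarrow> q \<in> D" by simp
  show "tangent \<Phi> D \<zeta> df \<Longrightarrow> (galerkin \<Phi> D \<zeta> fv df Lf \<longleftrightarrow>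
           (\<forall>g. tangent \<Phi> D \<zeta> g \<longrightarrow>
              (LINT q:D|lborel. (df q - Lf q)\<^sup>2 / fv q) \<le> (LINT q:D|lborel. (g q - Lf q)\<^sup>2 / fv q)))"
  proof -
    assume "tangent \<Phi> D \<zeta> df"
    then have "\<exists>c. \<forall>q\<in>D. df q = (\<Sum>m\<in>UNIV. c m * bas m \<zeta> q)" by (simp only: tan)
    then obtain d where d: "\<forall>q\<in>D. df q = (\<Sum>m\<in>UNIV. d m * bas m \<zeta> q)" by blast
    show ?thesis unfolding gal tan by (simp only: PG(1)[OF d] PG(2)[OF d])
  qed
  show "(tangent \<Phi> D \<zeta> df \<and> galerkin \<Phi> D \<zeta> fv df Lf) \<longleftrightarrow> (\<forall>q\<in>D. df q = projP D bas \<zeta> fv Lf q)"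
  proof
    assume H: "tangent \<Phi> D \<zeta> df \<and> galerkin \<Phi> D \<zeta> fv df Lf"
    then have "tangent \<Phi> D \<zeta> df" by (rule conjunct1)
    then have "\<exists>c. \<forall>q\<in>D. df q = (\<Sum>m\<in>UNIV. c m * bas m \<zeta> q)" by (simp only: tan)
    then obtain d where d: "\<forall>q\<in>D. df q = (\<Sum>m\<in>UNIV. d m * bas m \<zeta> q)" by blast
    have "galerkin \<Phi> D \<zeta> fv df Lf" using H by (rule conjunct2)
    then have "\<forall>\<phi>. (\<exists>c. \<forall>q\<in>D. \<phi> q = (\<Sum>m\<in>UNIV. c m * bas m \<zeta> q)) \<longrightarrow> ipw D fv \<phi> (\<lambda>q. df q - Lf q) = 0"
      by (simp only: gal)
    then have "\<forall>m. d m = ipw D fv (bas m \<zeta>) Lf" by (rule PG(1)[OF d, THEN iffD1])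
    then show "\<forall>q\<in>D. df q = projP D bas \<zeta> fv Lf q" using d by (simp add: proj)
  next
    assume H: "\<forall>q\<in>D. df q = projP D bas \<zeta> fv Lf q"
    then have d: "\<forall>q\<in>D. df q = (\<Sum>m\<in>UNIV. ipw D fv (bas m \<zeta>) Lf * bas m \<zeta> q)" by (simp add: proj)
    then have "tangent \<Phi> D \<zeta> df" unfolding tan by (rule exI[where x="\<lambda>m. ipw D fv (bas m \<zeta>) Lf"])
    moreover have "galerkin \<Phi> D \<zeta> fv df Lf" unfolding gal PG(1)[OF d] by simp
    ultimately show "tangent \<Phi> D \<zeta> df \<and> galerkin \<Phi> D \<zeta> fv df Lf" ..
  qed
  show "tangent \<Phi> D \<zeta> fv \<Longrightarrow> tangent \<Phi> D \<zeta> df \<Longrightarrow> galerkin \<Phi> D \<zeta> fv df Lf \<Longrightarrow> set_integrable lborel D Lf \<Longrightarrow>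
         (LINT q:D|lborel. df q) = (LINT q:D|lborel. Lf q)"
  proof -
    assume tf: "tangent \<Phi> D \<zeta> fv" and td: "tangent \<Phi> D \<zeta> df" and g: "galerkin \<Phi> D \<zeta> fv df Lf"
      and iL: "set_integrable lborel D Lf"
    have sL2: "wL2 D fv (\<lambda>q. \<Sum>m\<in>UNIV. c m * bas m \<zeta> q)" for c
      by (rule wL2_sum[OF _ _ Dm Wm]) (auto simp: bL2 pos)
    have L2tan: "wL2 D fv g" if "tangent \<Phi> D \<zeta> g" for g
    proof -
      have "\<exists>c. \<forall>q\<in>D. g q = (\<Sum>m\<in>UNIV. c m * bas m \<zeta> q)" using that by (simp only: tan)
      then obtain c where c: "\<forall>q\<in>D. g q = (\<Sum>m\<in>UNIV. c m * bas m \<zeta> q)" by blast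
      have "(\<lambda>q. indicator D q * g q) = (\<lambda>q. indicator D q * (\<Sum>m\<in>UNIV. c m * bas m \<zeta> q))"
        using c by (auto simp: fun_eq_iff indicator_def)
      moreover have "set_integrable lborel D (\<lambda>q. (g q)\<^sup>2 / fv q) = set_integrable lborel D (\<lambda>q. (\<Sum>m\<in>UNIV. c m * bas m \<zeta> q)\<^sup>2 / fv q)"
        by (rule set_integrable_cong) (use c in auto)
      ultimately show ?thesis using sL2[of c] unfolding wL2_def by simp
    qed
    have i1: "set_integrable lborel D (\<lambda>q. df q * fv q / fv q)"
      by (rule wL2_prod_integrable[OF Dm Wm _ L2tan[OF td] L2tan[OF tf]]) (rule pos)
    have nz: "fv q \<noteq> 0" if "q \<in> D" for q using pos[OF that] by simp
    have "set_integrable lborel D (\<lambda>q. df q * fv q / fv q) = set_integrable lborel D df"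
      by (rule set_integrable_cong) (auto simp: nz)
    with i1 have idf: "set_integrable lborel D df" by simp
    have G: "\<forall>\<phi>. (\<exists>c. \<forall>q\<in>D. \<phi> q = (\<Sum>m\<in>UNIV. c m * bas m \<zeta> q)) \<longrightarrow> ipw D fv \<phi> (\<lambda>q. df q - Lf q) = 0"
      using g by (simp only: gal)
    have T: "\<exists>c. \<forall>q\<in>D. fv q = (\<Sum>m\<in>UNIV. c m * bas m \<zeta> q)" using tf by (simp only: tan)
    have "0 = ipw D fv fv (\<lambda>q. df q - Lf q)" using G[rule_format, OF T] by simp
    also have "\<dots> = (LINT q:D|lborel. df q - Lf q)"
      unfolding ipw_def by (rule set_lebesgue_integral_cong[OF Dm]) (auto simp: nz)
    also have "\<dots> = (LINT q:D|lborel. df q) - (LINT q:D|lborel. Lf q)"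
      by (rule set_integral_diff(2)[OF idf iL])
    finally show ?thesis by simp
  qed
qed

theorem proposition1:
  fixes \<Omega> :: "'x::euclidean_space set" and D :: "'q::euclidean_space set"
    and Z :: "(real^'m::finite) set"
    and ev :: "'h::{real_inner,complete_space} \<Rightarrow> 'x \<Rightarrow> 'q \<Rightarrow> real"
    and Dom :: "'h set" and L :: "real \<Rightarrow> 'h \<Rightarrow> 'h"
    and T T1 :: real and \<psi>0 :: 'h and \<psi> :: "real \<Rightarrow> 'h"
    and \<Phi> :: "real^'m \<Rightarrow> 'q \<Rightarrow> real" and bas :: "'m \<Rightarrow> real^'m \<Rightarrow> 'q \<Rightarrow> real"
    and f f' :: "real \<Rightarrow> 'h" and z :: "real \<Rightarrow> 'x \<Rightarrow> real^'m"
  assumes dom_\<Omega>: "bounded \<Omega>" "lipschitz_domain \<Omega>"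
    and open_D: "open D"
    and ev_linear: "\<And>a b h h' x q. ev (a *\<^sub>R h + b *\<^sub>R h') x q = a * ev h x q + b * ev h' x q"
    and ev_inj: "\<And>h h'. (AE p in lborel. p \<in> \<Omega> \<times> D \<longrightarrow> ev h (fst p) (snd p) = ev h' (fst p) (snd p))
                   \<Longrightarrow> h = h'"
    and Dom_subspace: "subspace Dom"
    and L_linear: "\<And>t a b u v. t \<in> {0<..<T} \<Longrightarrow> u \<in> Dom \<Longrightarrow> v \<in> Dom \<Longrightarrow>
                      L t (a *\<^sub>R u + b *\<^sub>R v) = a *\<^sub>R L t u + b *\<^sub>R L t v"
    and L_mass: "\<And>t \<phi> x. t \<in> {0<..<T} \<Longrightarrow> \<phi> \<in> Dom \<Longrightarrow> x \<in> \<Omega> \<Longrightarrow>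
                   set_integrable lborel D (ev (L t \<phi>) x) \<and> (LINT q:D|lborel. ev (L t \<phi>) x q) = 0"
    and \<psi>0_density: "AE x in lborel. x \<in> \<Omega> \<longrightarrow>
                   (\<forall>q\<in>D. ev \<psi>0 x q \<ge> 0) \<and> set_integrable lborel D (ev \<psi>0 x) \<and>
                   (LINT q:D|lborel. ev \<psi>0 x q) = 1"
    and \<psi>_solves: "\<psi> 0 = \<psi>0" "\<And>t. t \<in> {0..<T} \<Longrightarrow> \<psi> t \<in> Dom" "continuous_on {0..<T} \<psi>"
                 "\<And>t. t \<in> {0<..<T} \<Longrightarrow> (\<psi> has_vector_derivative L t (\<psi> t)) (at t)"
    and Z_open: "open Z"
    and \<Phi>_smooth: "smooth_on (Z \<times> D) (\<lambda>p. \<Phi> (fst p) (snd p))"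
    and \<Phi>_pos: "\<And>\<zeta> q. \<zeta> \<in> Z \<Longrightarrow> q \<in> D \<Longrightarrow> \<Phi> \<zeta> q > 0"
    and full_rank: "\<And>\<zeta> w. \<zeta> \<in> Z \<Longrightarrow> (\<forall>q\<in>D. frechet_derivative (\<lambda>z. \<Phi> z q) (at \<zeta>) w = 0) \<Longrightarrow> w = 0"
    and bas_tangent: "\<And>\<zeta> m. \<zeta> \<in> Z \<Longrightarrow> tangent \<Phi> D \<zeta> (bas m \<zeta>) \<and> wL2 D (\<Phi> \<zeta>) (bas m \<zeta>)"
    and bas_orthonormal: "\<And>\<zeta> m l. \<zeta> \<in> Z \<Longrightarrow>
                   (LINT q:D|lborel. bas m \<zeta> q * bas l \<zeta> q / \<Phi> \<zeta> q) = (if m = l then 1 else 0)"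
    and bas_spans: "\<And>\<zeta> g. \<zeta> \<in> Z \<Longrightarrow> tangent \<Phi> D \<zeta> g \<Longrightarrow>
                   \<exists>c. \<forall>q\<in>D. g q = (\<Sum>m\<in>UNIV. c m * bas m \<zeta> q)"
    and T1: "0 < T1" "T1 \<le> T"
    and f_in_M: "\<And>t x q. t \<in> {0..<T1} \<Longrightarrow> x \<in> \<Omega> \<Longrightarrow> q \<in> D \<Longrightarrow>
                   z t x \<in> Z \<and> ev (f t) x q = \<Phi> (z t x) q"
    and f_Dom: "\<And>t. t \<in> {0..<T1} \<Longrightarrow> f t \<in> Dom"
    and f_cont: "continuous_on {0..<T1} f"
    and f_deriv: "\<And>t. t \<in> {0<..<T1} \<Longrightarrow> (f has_vector_derivative f' t) (at t)"
    and Lf_L2: "\<And>t x. t \<in> {0<..<T1} \<Longrightarrow> x \<in> \<Omega> \<Longrightarrow> wL2 D (ev (f t) x) (ev (L t (f t)) x)"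
  shows
    \<comment> \<open>(i) Galerkin condition iff minimisation of the weighted residual over the tangent space\<close>
    "(\<forall>t\<in>{0<..<T1}. \<forall>x\<in>\<Omega>.
        (tangent \<Phi> D (z t x) (ev (f' t) x) \<and>
         galerkin \<Phi> D (z t x) (ev (f t) x) (ev (f' t) x) (ev (L t (f t)) x))
      \<longleftrightarrow>
        (tangent \<Phi> D (z t x) (ev (f' t) x) \<and>
         (\<forall>g. tangent \<Phi> D (z t x) g \<longrightarrow>
            (LINT q:D|lborel. (ev (f' t) x q - ev (L t (f t)) x q)\<^sup>2 / ev (f t) x q)
              \<le> (LINT q:D|lborel. (g q - ev (L t (f t)) x q)\<^sup>2 / ev (f t) x q))))
     \<and>
     \<comment> \<open>(ii) Galerkin condition iff \<partial>_t f = P_f L f\<close>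
     (\<forall>t\<in>{0<..<T1}. \<forall>x\<in>\<Omega>.
        (tangent \<Phi> D (z t x) (ev (f' t) x) \<and>
         galerkin \<Phi> D (z t x) (ev (f t) x) (ev (f' t) x) (ev (L t (f t)) x))
      \<longleftrightarrow>
        (\<forall>q\<in>D. ev (f' t) x q = projP D bas (z t x) (ev (f t) x) (ev (L t (f t)) x) q))
     \<and>
     \<comment> \<open>(iii) mass conservation\<close>
     ((AE p in lborel. p \<in> {0<..<T1} \<times> \<Omega> \<longrightarrow>
         tangent \<Phi> D (z (fst p) (snd p)) (ev (f' (fst p)) (snd p)) \<and>
         galerkin \<Phi> D (z (fst p) (snd p)) (ev (f (fst p)) (snd p)) (ev (f' (fst p)) (snd p))
                  (ev (L (fst p) (f (fst p))) (snd p)))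
      \<longrightarrow> (AE p in lborel. p \<in> {0<..<T1} \<times> \<Omega> \<longrightarrow>
            tangent \<Phi> D (z (fst p) (snd p)) (ev (f (fst p)) (snd p)))
      \<longrightarrow> (\<forall>x\<in>\<Omega>. continuous_on {0..<T1} (\<lambda>t. LINT q:D|lborel. ev (f t) x q) \<and>
            (\<forall>t\<in>{0<..<T1}. ((\<lambda>s. LINT q:D|lborel. ev (f s) x q) has_real_derivative
                               (LINT q:D|lborel. ev (f' t) x q)) (at t)))
      \<longrightarrow> (AE x in lborel. x \<in> \<Omega> \<longrightarrow>
            (\<forall>t\<in>{0..<T1}. (LINT q:D|lborel. ev (f t) x q) = (LINT q:D|lborel. ev (f 0) x q))))
     \<and>
     \<comment> \<open>(iv) error representation via the evolution operator\<close>
     (\<forall>Tev Pop.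
      (AE p in lborel. p \<in> {0<..<T1} \<times> \<Omega> \<longrightarrow>
         tangent \<Phi> D (z (fst p) (snd p)) (ev (f' (fst p)) (snd p)) \<and>
         galerkin \<Phi> D (z (fst p) (snd p)) (ev (f (fst p)) (snd p)) (ev (f' (fst p)) (snd p))
                  (ev (L (fst p) (f (fst p))) (snd p)))
      \<longrightarrow> evolution_operator T L Dom Tev
      \<longrightarrow> \<psi>0 = f 0
      \<longrightarrow> (\<forall>s\<in>{0<..<T1}. \<forall>\<phi> x q. x \<in> \<Omega> \<longrightarrow> q \<in> D \<longrightarrow>
            ev (Pop s \<phi>) x q = projP D bas (z s x) (ev (f s) x) (ev \<phi> x) q)
      \<longrightarrow> (\<forall>t\<in>{0..<T1}.
            ((\<lambda>s. Tev t s (L s (f s) - Pop s (L s (f s)))) has_integral (\<psi> t - f t)) {0..t}))"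
proof -
  have Dm: "D \<in> sets lborel" using open_D by simp
  have zZ: "z t x \<in> Z" and fvE: "\<And>q. q \<in> D \<Longrightarrow> ev (f t) x q = \<Phi> (z t x) q"
    if A: "t \<in> {0<..<T1}" "x \<in> \<Omega>" "D \<noteq> {}" for t x
  proof -
    obtain q0 where "q0 \<in> D" using A(3) by blast
    then show "z t x \<in> Z" using f_in_M[of t x q0] A by auto
    show "\<And>q. q \<in> D \<Longrightarrow> ev (f t) x q = \<Phi> (z t x) q" using f_in_M[of t x] A by auto
  qed
  have PF1: "tangent \<Phi> D (z t x) df \<Longrightarrow>
       (galerkin \<Phi> D (z t x) (ev (f t) x) df (ev (L t (f t)) x) \<longleftrightarrow>
           (\<forall>g. tangent \<Phi> D (z t x) g \<longrightarrow>
              (LINT q:D|lborel. (df q - ev (L t (f t)) x q)\<^sup>2 / ev (f t) x q) \<le> (LINT q:D|lborel. (g q - ev (L t (f t)) x q)\<^sup>2 / ev (f t) x q)))"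
    if "t \<in> {0<..<T1}" "x \<in> \<Omega>" "D \<noteq> {}" for t x df
    by (rule pointwise_facts(1)[where \<zeta>="z t x" and fv="ev (f t) x" and Lf="ev (L t (f t)) x" and D=D and Z=Z and \<Phi>=\<Phi> and bas=bas];
        (rule open_D \<Phi>_smooth zZ[OF that(1-3)] \<Phi>_pos bas_tangent bas_orthonormal bas_spans fvE[OF that(1-3)] Lf_L2[OF that(1,2)] that)?)
  have PF2: "(tangent \<Phi> D (z t x) df \<and> galerkin \<Phi> D (z t x) (ev (f t) x) df (ev (L t (f t)) x))
      \<longleftrightarrow> (\<forall>q\<in>D. df q = projP D bas (z t x) (ev (f t) x) (ev (L t (f t)) x) q)"
    if "t \<in> {0<..<T1}" "x \<in> \<Omega>" "D \<noteq> {}" for t x df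
    by (rule pointwise_facts(2)[where \<zeta>="z t x" and fv="ev (f t) x" and Lf="ev (L t (f t)) x" and D=D and Z=Z and \<Phi>=\<Phi> and bas=bas];
        (rule open_D \<Phi>_smooth zZ[OF that(1-3)] \<Phi>_pos bas_tangent bas_orthonormal bas_spans fvE[OF that(1-3)] Lf_L2[OF that(1,2)] that)?)
  have PF3: "(LINT q:D|lborel. df q) = (LINT q:D|lborel. ev (L t (f t)) x q)"
    if "t \<in> {0<..<T1}" "x \<in> \<Omega>" "D \<noteq> {}" "tangent \<Phi> D (z t x) (ev (f t) x)" "tangent \<Phi> D (z t x) df"
       "galerkin \<Phi> D (z t x) (ev (f t) x) df (ev (L t (f t)) x)"
       "set_integrable lborel D (ev (L t (f t)) x)" for t x df
    by (rule pointwise_facts(3)[where \<zeta>="z t x" and fv="ev (f t) x" and Lf="ev (L t (f t)) x" and D=D and Z=Z and \<Phi>=\<Phi> and bas=bas];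
        (rule open_D \<Phi>_smooth zZ[OF that(1-3)] \<Phi>_pos bas_tangent bas_orthonormal bas_spans fvE[OF that(1-3)] Lf_L2[OF that(1,2)] that)?)
  have empty_int: "(LINT q:{}|lborel. g q) = 0" for g :: "'q \<Rightarrow> real"
    by (simp add: set_lebesgue_integral_def)
  have part1: "\<forall>t\<in>{0<..<T1}. \<forall>x\<in>\<Omega>.
        (tangent \<Phi> D (z t x) (ev (f' t) x) \<and>
         galerkin \<Phi> D (z t x) (ev (f t) x) (ev (f' t) x) (ev (L t (f t)) x))
      \<longleftrightarrow>
        (tangent \<Phi> D (z t x) (ev (f' t) x) \<and>
         (\<forall>g. tangent \<Phi> D (z t x) g \<longrightarrow>
            (LINT q:D|lborel. (ev (f' t) x q - ev (L t (f t)) x q)\<^sup>2 / ev (f t) x q)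
              \<le> (LINT q:D|lborel. (g q - ev (L t (f t)) x q)\<^sup>2 / ev (f t) x q)))"
  proof (intro ballI)
    fix t x assume tx: "t \<in> {0<..<T1}" "x \<in> \<Omega>"
    show "(tangent \<Phi> D (z t x) (ev (f' t) x) \<and>
         galerkin \<Phi> D (z t x) (ev (f t) x) (ev (f' t) x) (ev (L t (f t)) x))
      \<longleftrightarrow>
        (tangent \<Phi> D (z t x) (ev (f' t) x) \<and>
         (\<forall>g. tangent \<Phi> D (z t x) g \<longrightarrow>
            (LINT q:D|lborel. (ev (f' t) x q - ev (L t (f t)) x q)\<^sup>2 / ev (f t) x q)
              \<le> (LINT q:D|lborel. (g q - ev (L t (f t)) x q)\<^sup>2 / ev (f t) x q)))"
    proof (cases "D = {}")
      case True
      then show ?thesis by (simp add: galerkin_def empty_int)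
    next
      case False
      show ?thesis using PF1[OF tx False] by blast
    qed
  qed
  have part2: "\<forall>t\<in>{0<..<T1}. \<forall>x\<in>\<Omega>.
        (tangent \<Phi> D (z t x) (ev (f' t) x) \<and>
         galerkin \<Phi> D (z t x) (ev (f t) x) (ev (f' t) x) (ev (L t (f t)) x))
      \<longleftrightarrow>
        (\<forall>q\<in>D. ev (f' t) x q = projP D bas (z t x) (ev (f t) x) (ev (L t (f t)) x) q)"
  proof (intro ballI)
    fix t x assume tx: "t \<in> {0<..<T1}" "x \<in> \<Omega>"
    show "(tangent \<Phi> D (z t x) (ev (f' t) x) \<and>
         galerkin \<Phi> D (z t x) (ev (f t) x) (ev (f' t) x) (ev (L t (f t)) x))
      \<longleftrightarrow>
        (\<forall>q\<in>D. ev (f' t) x q = projP D bas (z t x) (ev (f t) x) (ev (L t (f t)) x) q)"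
    proof (cases "D = {}")
      case True
      then show ?thesis by (simp add: galerkin_def tangent_def empty_int)
    next
      case False
      show ?thesis by (rule PF2[OF tx False])
    qed
  qed
  have part3: "(AE p in lborel. p \<in> {0<..<T1} \<times> \<Omega> \<longrightarrow>
         tangent \<Phi> D (z (fst p) (snd p)) (ev (f' (fst p)) (snd p)) \<and>
         galerkin \<Phi> D (z (fst p) (snd p)) (ev (f (fst p)) (snd p)) (ev (f' (fst p)) (snd p))
                  (ev (L (fst p) (f (fst p))) (snd p)))
      \<longrightarrow> (AE p in lborel. p \<in> {0<..<T1} \<times> \<Omega> \<longrightarrow>
            tangent \<Phi> D (z (fst p) (snd p)) (ev (f (fst p)) (snd p)))
      \<longrightarrow> (\<forall>x\<in>\<Omega>. continuous_on {0..<T1} (\<lambda>t. LINT q:D|lborel. ev (f t) x q) \<and>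
            (\<forall>t\<in>{0<..<T1}. ((\<lambda>s. LINT q:D|lborel. ev (f s) x q) has_real_derivative
                               (LINT q:D|lborel. ev (f' t) x q)) (at t)))
      \<longrightarrow> (AE x in lborel. x \<in> \<Omega> \<longrightarrow>
            (\<forall>t\<in>{0..<T1}. (LINT q:D|lborel. ev (f t) x q) = (LINT q:D|lborel. ev (f 0) x q)))"
  proof (intro impI)
    assume H1: "AE p in lborel. p \<in> {0<..<T1} \<times> \<Omega> \<longrightarrow>
         tangent \<Phi> D (z (fst p) (snd p)) (ev (f' (fst p)) (snd p)) \<and>
         galerkin \<Phi> D (z (fst p) (snd p)) (ev (f (fst p)) (snd p)) (ev (f' (fst p)) (snd p))
                  (ev (L (fst p) (f (fst p))) (snd p))"
      and H2: "AE p in lborel. p \<in> {0<..<T1} \<times> \<Omega> \<longrightarrow>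
            tangent \<Phi> D (z (fst p) (snd p)) (ev (f (fst p)) (snd p))"
      and H3: "\<forall>x\<in>\<Omega>. continuous_on {0..<T1} (\<lambda>t. LINT q:D|lborel. ev (f t) x q) \<and>
            (\<forall>t\<in>{0<..<T1}. ((\<lambda>s. LINT q:D|lborel. ev (f s) x q) has_real_derivative
                               (LINT q:D|lborel. ev (f' t) x q)) (at t))"
    have zero: "(LINT q:D|lborel. ev (f' t) x q) = 0"
      if tx: "t \<in> {0<..<T1}" "x \<in> \<Omega>" and A1: "tangent \<Phi> D (z t x) (ev (f' t) x) \<and>
         galerkin \<Phi> D (z t x) (ev (f t) x) (ev (f' t) x) (ev (L t (f t)) x)"
        and A2: "tangent \<Phi> D (z t x) (ev (f t) x)" for t x
    proof (cases "D = {}")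
      case True then show ?thesis by (simp add: empty_int)
    next
      case False
      have tT: "t \<in> {0<..<T}" using tx T1 by auto
      have fD: "f t \<in> Dom" using f_Dom tx by auto
      have LM: "set_integrable lborel D (ev (L t (f t)) x) \<and> (LINT q:D|lborel. ev (L t (f t)) x q) = 0"
        by (rule L_mass[OF tT fD tx(2)])
      have "(LINT q:D|lborel. ev (f' t) x q) = (LINT q:D|lborel. ev (L t (f t)) x q)"
        by (rule PF3[OF tx False A2 conjunct1[OF A1] conjunct2[OF A1] conjunct1[OF LM]])
      then show ?thesis using LM by simp
    qed
    have "AE p in lborel. (fst p, snd p) \<in> {0<..<T1} \<times> \<Omega> \<longrightarrow> (LINT q:D|lborel. ev (f' (fst p)) (snd p) q) = 0"
      using H1 H2
    proof eventually_elim
      case (elim p)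
      then show ?case using zero[of "fst p" "snd p"] by auto
    qed
    then have "AE x in lborel. AE t in lborel. (t, x) \<in> {0<..<T1} \<times> \<Omega> \<longrightarrow> (LINT q:D|lborel. ev (f' t) x q) = 0"
      by (rule AE_prod_snd[where P="\<lambda>t x. (t, x) \<in> {0<..<T1} \<times> \<Omega> \<longrightarrow> (LINT q:D|lborel. ev (f' t) x q) = 0"])
    then show "AE x in lborel. x \<in> \<Omega> \<longrightarrow>
            (\<forall>t\<in>{0..<T1}. (LINT q:D|lborel. ev (f t) x q) = (LINT q:D|lborel. ev (f 0) x q))"
    proof (rule eventually_mono, intro impI ballI)
      fix x t
      assume AEt: "AE t in lborel. (t, x) \<in> {0<..<T1} \<times> \<Omega> \<longrightarrow> (LINT q:D|lborel. ev (f' t) x q) = 0"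
        and x: "x \<in> \<Omega>" and t: "t \<in> {0..<T1}"
      define M where "M s = (LINT q:D|lborel. ev (f s) x q)" for s
      define M' where "M' s = (LINT q:D|lborel. ev (f' s) x q)" for s
      show "(LINT q:D|lborel. ev (f t) x q) = (LINT q:D|lborel. ev (f 0) x q)"
      proof (cases "t = 0")
        case True then show ?thesis by simp
      next
        case False
        then have t0: "0 < t" using t by auto
        have cont: "continuous_on {0..t} M"
          using H3 x t unfolding M_def by (auto intro: continuous_on_subset)
        have der: "(M has_vector_derivative M' s) (at s)" if "s \<in> {0<..<t}" for s
        proof -
          have "s \<in> {0<..<T1}" using that t by auto
          then have "(M has_real_derivative M' s) (at s)" using H3 x unfolding M_def M'_def by blast
          then show ?thesis by (simp add: has_real_derivative_iff_has_vector_derivative)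
        qed
        have ftc: "(M' has_integral (M t - M 0)) {0..t}"
          by (rule fundamental_theorem_of_calculus_interior[OF _ cont der]) (use t0 in auto)
        have "AE s in lborel. s \<in> {0<..<T1} \<longrightarrow> M' s = 0"
          using AEt by (rule eventually_mono) (use x in \<open>auto simp: M'_def\<close>)
        then have neg: "negligible {s. \<not> (s \<in> {0<..<T1} \<longrightarrow> M' s = 0)}" by (rule AE_negligible)
        have neg2: "negligible ({s. \<not> (s \<in> {0<..<T1} \<longrightarrow> M' s = 0)} \<union> {0, t})"
          using neg by (rule negligible_Un) auto
        have "((\<lambda>s. 0) has_integral (M t - M 0)) {0..t}"
        proof (rule has_integral_spike[OF neg2 _ ftc])
          fix s assume "s \<in> {0..t} - ({s. \<not> (s \<in> {0<..<T1} \<longrightarrow> M' s = 0)} \<union> {0, t})"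
          then show "0 = M' s" using t by auto
        qed
        then have "M t - M 0 = 0" using has_integral_0 has_integral_unique by blast
        then show ?thesis unfolding M_def by simp
      qed
    qed
  qed
  have part4: "(\<forall>Tev Pop.
      (AE p in lborel. p \<in> {0<..<T1} \<times> \<Omega> \<longrightarrow>
         tangent \<Phi> D (z (fst p) (snd p)) (ev (f' (fst p)) (snd p)) \<and>
         galerkin \<Phi> D (z (fst p) (snd p)) (ev (f (fst p)) (snd p)) (ev (f' (fst p)) (snd p))
                  (ev (L (fst p) (f (fst p))) (snd p)))
      \<longrightarrow> evolution_operator T L Dom Tev
      \<longrightarrow> \<psi>0 = f 0
      \<longrightarrow> (\<forall>s\<in>{0<..<T1}. \<forall>\<phi> x q. x \<in> \<Omega> \<longrightarrow> q \<in> D \<longrightarrow>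
            ev (Pop s \<phi>) x q = projP D bas (z s x) (ev (f s) x) (ev \<phi> x) q)
      \<longrightarrow> (\<forall>t\<in>{0..<T1}.
            ((\<lambda>s. Tev t s (L s (f s) - Pop s (L s (f s)))) has_integral (\<psi> t - f t)) {0..t}))"
  proof (intro allI impI ballI)
    fix Tev Pop t
    assume HA: "AE p in lborel. p \<in> {0<..<T1} \<times> \<Omega> \<longrightarrow>
         tangent \<Phi> D (z (fst p) (snd p)) (ev (f' (fst p)) (snd p)) \<and>
         galerkin \<Phi> D (z (fst p) (snd p)) (ev (f (fst p)) (snd p)) (ev (f' (fst p)) (snd p))
                  (ev (L (fst p) (f (fst p))) (snd p))"
      and EV: "evolution_operator T L Dom Tev"
      and psi0: "\<psi>0 = f 0"
      and PopH: "\<forall>s\<in>{0<..<T1}. \<forall>\<phi> x q. x \<in> \<Omega> \<longrightarrow> q \<in> D \<longrightarrow>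
            ev (Pop s \<phi>) x q = projP D bas (z s x) (ev (f s) x) (ev \<phi> x) q"
      and t: "t \<in> {0..<T1}"
    show "((\<lambda>s. Tev t s (L s (f s) - Pop s (L s (f s)))) has_integral (\<psi> t - f t)) {0..t}"
    proof (cases "t = 0")
      case True
      then show ?thesis using \<psi>_solves(1) psi0 by (simp add: has_integral_refl)
    next
      case False
      then have t0: "0 < t" and tT: "t < T" using t T1 by auto
      have bl: "\<And>s. s \<in> {0..t} \<Longrightarrow> bounded_linear (Tev t s)"
        using EV tT unfolding evolution_operator_def by auto
      have tid: "Tev t t = id" using EV tT t0 unfolding evolution_operator_def by auto
      have tc: "\<And>g. continuous_on {0..t} (\<lambda>s. Tev t s g)"
        using EV tT t0 unfolding evolution_operator_def by auto
      have td: "\<And>g s. g \<in> Dom \<Longrightarrow> s \<in> {0<..<t} \<Longrightarrow> ((\<lambda>s. Tev t s g) has_vector_derivative - Tev t s (L s g)) (at s)"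
        using EV tT t0 unfolding evolution_operator_def by auto
      have "\<exists>B. \<forall>s\<in>{0..t}. \<forall>g. norm (Tev t s g) \<le> B * norm g"
        by (rule unif_bound[of "{0..t}" "Tev t"]) (auto intro: bl tc)
      then obtain B where B0: "\<forall>s\<in>{0..t}. \<forall>g. norm (Tev t s g) \<le> B * norm g" by blast
      have B: "\<And>s g. s \<in> {0..t} \<Longrightarrow> norm (Tev t s g) \<le> B * norm g" using B0 by blast
      have cpsi: "continuous_on {0..t} (\<lambda>s. Tev t s (\<psi> s))"
        apply (rule evo_cont[where Tf="Tev t" and B=B])
           apply (erule B)
          apply (erule bl)
         apply (rule tc)
        apply (rule continuous_on_subset[OF \<psi>_solves(3)])
        using tT apply auto
        done
      have dpsi: "((\<lambda>s. Tev t s (\<psi> s)) has_vector_derivative (- Tev t s (L s (\<psi> s)) + Tev t s (L s (\<psi> s)))) (at s)"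
        if s: "s \<in> {0<..<t}" for s
      proof (rule evo_deriv[where Tf="Tev t" and B=B and s=s and h=\<psi> and h'="L s (\<psi> s)"])
        show "\<And>s g. s \<in> {0..t} \<Longrightarrow> norm (Tev t s g) \<le> B * norm g" by (rule B)
        show "\<And>s. s \<in> {0..t} \<Longrightarrow> bounded_linear (Tev t s)" by (rule bl)
        show "\<And>g. continuous_on {0..t} (\<lambda>s. Tev t s g)" by (rule tc)
        show "s \<in> {0<..<t}" by (rule s)
        show "(\<psi> has_vector_derivative L s (\<psi> s)) (at s)" using \<psi>_solves(4) s tT by auto
        show "((\<lambda>y. Tev t y (\<psi> s)) has_vector_derivative - Tev t s (L s (\<psi> s))) (at s)"
          using td[OF _ s] \<psi>_solves(2) s tT by auto
      qed
      have "((\<lambda>s. - Tev t s (L s (\<psi> s)) + Tev t s (L s (\<psi> s))) has_integral (Tev t t (\<psi> t) - Tev t 0 (\<psi> 0))) {0..t}"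
        by (rule fundamental_theorem_of_calculus_interior[OF _ cpsi dpsi]) (use t0 in auto)
      then have "((\<lambda>s. 0) has_integral (Tev t t (\<psi> t) - Tev t 0 (\<psi> 0))) {0..t}" by simp
      then have "Tev t t (\<psi> t) - Tev t 0 (\<psi> 0) = 0" using has_integral_0 has_integral_unique by blast
      then have psit: "\<psi> t = Tev t 0 (f 0)" using tid \<psi>_solves(1) psi0 by simp
      have cf: "continuous_on {0..t} (\<lambda>s. Tev t s (f s))"
        apply (rule evo_cont[where Tf="Tev t" and B=B])
           apply (erule B)
          apply (erule bl)
         apply (rule tc)
        apply (rule continuous_on_subset[OF f_cont])
        using t apply auto
        done
      have df: "((\<lambda>s. Tev t s (f s)) has_vector_derivative (- Tev t s (L s (f s)) + Tev t s (f' s))) (at s)"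
        if s: "s \<in> {0<..<t}" for s
      proof (rule evo_deriv[where Tf="Tev t" and B=B and s=s and h=f and h'="f' s"])
        show "\<And>s g. s \<in> {0..t} \<Longrightarrow> norm (Tev t s g) \<le> B * norm g" by (rule B)
        show "\<And>s. s \<in> {0..t} \<Longrightarrow> bounded_linear (Tev t s)" by (rule bl)
        show "\<And>g. continuous_on {0..t} (\<lambda>s. Tev t s g)" by (rule tc)
        show "s \<in> {0<..<t}" by (rule s)
        show "(f has_vector_derivative f' s) (at s)" using f_deriv s t by auto
        show "((\<lambda>y. Tev t y (f s)) has_vector_derivative - Tev t s (L s (f s))) (at s)"
          using td[OF _ s] f_Dom s t by auto
      qed
      have ftc: "((\<lambda>s. - Tev t s (L s (f s)) + Tev t s (f' s)) has_integral (Tev t t (f t) - Tev t 0 (f 0))) {0..t}"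
        by (rule fundamental_theorem_of_calculus_interior[OF _ cf df]) (use t0 in auto)
      have "AE p in lborel. (fst p, snd p) \<in> {0<..<T1} \<times> \<Omega> \<longrightarrow>
               (\<forall>q\<in>D. ev (f' (fst p)) (snd p) q = ev (Pop (fst p) (L (fst p) (f (fst p)))) (snd p) q)"
        using HA
      proof (rule eventually_mono, intro impI ballI)
        fix p q
        assume h: "p \<in> {0<..<T1} \<times> \<Omega> \<longrightarrow>
         tangent \<Phi> D (z (fst p) (snd p)) (ev (f' (fst p)) (snd p)) \<and>
         galerkin \<Phi> D (z (fst p) (snd p)) (ev (f (fst p)) (snd p)) (ev (f' (fst p)) (snd p))
                  (ev (L (fst p) (f (fst p))) (snd p))"
          and p: "(fst p, snd p) \<in> {0<..<T1} \<times> \<Omega>" and q: "q \<in> D"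
        have p1: "fst p \<in> {0<..<T1}" "snd p \<in> \<Omega>" using p by auto
        have De: "D \<noteq> {}" using q by auto
        have "\<forall>q\<in>D. ev (f' (fst p)) (snd p) q = projP D bas (z (fst p) (snd p)) (ev (f (fst p)) (snd p)) (ev (L (fst p) (f (fst p))) (snd p)) q"
          using PF2[OF p1 De] h p by auto
        then show "ev (f' (fst p)) (snd p) q = ev (Pop (fst p) (L (fst p) (f (fst p)))) (snd p) q"
          using PopH p1 q by auto
      qed
      then have "AE s in lborel. AE x in lborel. (s, x) \<in> {0<..<T1} \<times> \<Omega> \<longrightarrow>
               (\<forall>q\<in>D. ev (f' s) x q = ev (Pop s (L s (f s))) x q)"
        by (rule AE_prod_fst[where P="\<lambda>s x. (s, x) \<in> {0<..<T1} \<times> \<Omega> \<longrightarrow>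
               (\<forall>q\<in>D. ev (f' s) x q = ev (Pop s (L s (f s))) x q)"])
      then have "AE s in lborel. s \<in> {0<..<T1} \<longrightarrow> f' s = Pop s (L s (f s))"
      proof (rule eventually_mono, intro impI)
        fix s assume h: "AE x in lborel. (s, x) \<in> {0<..<T1} \<times> \<Omega> \<longrightarrow>
               (\<forall>q\<in>D. ev (f' s) x q = ev (Pop s (L s (f s))) x q)" and s: "s \<in> {0<..<T1}"
        have "AE x in lborel. x \<in> \<Omega> \<longrightarrow> (\<forall>q\<in>D. ev (f' s) x q = ev (Pop s (L s (f s))) x q)"
          using h by (rule eventually_mono) (use s in auto)
        then have "AE p in lborel. p \<in> \<Omega> \<times> D \<longrightarrow> ev (f' s) (fst p) (snd p) = ev (Pop s (L s (f s))) (fst p) (snd p)"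
          by (rule AE_lift_prod[where E="\<lambda>x q. ev (f' s) x q = ev (Pop s (L s (f s))) x q"])
        then show "f' s = Pop s (L s (f s))" by (rule ev_inj)
      qed
      then have neg: "negligible {s. \<not> (s \<in> {0<..<T1} \<longrightarrow> f' s = Pop s (L s (f s)))}" by (rule AE_negligible)
      have neg2: "negligible ({s. \<not> (s \<in> {0<..<T1} \<longrightarrow> f' s = Pop s (L s (f s)))} \<union> {0, t})"
        using neg by (rule negligible_Un) auto
      have "((\<lambda>s. - Tev t s (L s (f s) - Pop s (L s (f s)))) has_integral (Tev t t (f t) - Tev t 0 (f 0))) {0..t}"
      proof (rule has_integral_spike[OF neg2 _ ftc])
        fix s assume s: "s \<in> {0..t} - ({s. \<not> (s \<in> {0<..<T1} \<longrightarrow> f' s = Pop s (L s (f s)))} \<union> {0, t})"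
        then have s1: "s \<in> {0..t}" and eq: "f' s = Pop s (L s (f s))" using t by auto
        show "- Tev t s (L s (f s) - Pop s (L s (f s))) = - Tev t s (L s (f s)) + Tev t s (f' s)"
          using eq by (simp add: linear_diff[OF bounded_linear.linear[OF bl[OF s1]]])
      qed
      from has_integral_neg[OF this]
      have "((\<lambda>s. Tev t s (L s (f s) - Pop s (L s (f s)))) has_integral - (Tev t t (f t) - Tev t 0 (f 0))) {0..t}"
        by simp
      moreover have "- (Tev t t (f t) - Tev t 0 (f 0)) = \<psi> t - f t" using tid psit by simp
      ultimately show ?thesis by simp
    qed
  qed
  show ?thesis using part1 part2 part3 part4 by blast
qed


end
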